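(* Let $\mathcal{H}$ be a rotation-invariant irreducible complete Pick reproducing kernel Hilbert space of analytic functions on $\mathbb{D}$ with kernel $k$. Then the embedding dimension $d$ of $\mathcal{H}$ is finite if and only if $\frac{1}{k(0,0)}-\frac{1}{k(z,w)}$ is a polynomial in $z\bar w$. Moreover, in that case $d$ equals the number of non-zero coefficients of this polynomial.
   Context: $\mathbb{D}$ is the open unit disc; $\mathbb{B}_d$ is the open unit ball of $\mathbb{C}^d$ ($\mathbb{C}^\infty=\ell^2(\mathbb{N})$). An RKHS $\mathcal{H}$ on $\mathbb{D}$ is rotation-invariant if for every $h\in\mathcal{H}$ and $\xi$ with $|\xi|=1$, $h(\xi z)\in\mathcal{H}$ and $\|h(\xi\,\cdot)\|=\|h\|$. It is irreducible if its kernel never vanishes. It is complete Pick if for every $m\ge1$, points $\lambda_1,\dots,\lambda_n$ and matrices $A_1,\dots,A_n\in M_m(\mathbb{C})$, positivity of $[(1-A_jA_k^* )k(\lambda_j,\lambda_k)]_{j,k}$ implies existence of an $m\times m$ multiplier $F$ of norm $\le1$ with $F(\lambda_j)=A_j$. The embedding dimension of $\mathcal{H}$ is the smallest $d\in\mathbb{N}\cup\{\infty\}$ for which there exist a map $b:\mathbb{D}\to\mathbb{B}_d$ and a nowhere-vanishing function $\delta:\mathbb{D}\to\mathbb{C}$ with $k(z,w)=\frac{\delta(z)\overline{\delta(w)}}{1-\langle b(z),b(w)\rangle}$. *)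

theory Defs
  imports "HOL-Analysis.Analysis" "HOL-Computational_Algebra.Polynomial" "HOL-Library.Extended_Nat"
begin

text \<open>A Hilbert space of functions on the unit disc is modelled concretely: a set H of
  functions complex \<Rightarrow> complex (normalised to vanish off the disc) together with an
  inner product ip, linear in the first and conjugate-linear in the second argument.\<close>

abbreviation disc :: "complex set" where "disc \<equiv> ball 0 1"

definition hnorm :: "((complex \<Rightarrow> complex) \<Rightarrow> (complex \<Rightarrow> complex) \<Rightarrow> complex) \<Rightarrow> (complex \<Rightarrow> complex) \<Rightarrow> real" where
  "hnorm ip f = sqrt (Re (ip f f))"

definition rkhs_disc ::
  "(complex \<Rightarrow> complex) set \<Rightarrow> ((complex \<Rightarrow> complex) \<Rightarrow> (complex \<Rightarrow> complex) \<Rightarrow> complex)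
     \<Rightarrow> (complex \<Rightarrow> complex \<Rightarrow> complex) \<Rightarrow> bool" where
  "rkhs_disc H ip k \<longleftrightarrow>
     \<comment> \<open>analytic functions on the disc (extended by 0 outside)\<close>
     (\<forall>f\<in>H. f holomorphic_on disc \<and> (\<forall>z. z \<notin> disc \<longrightarrow> f z = 0)) \<and>
     \<comment> \<open>complex vector space\<close>
     (\<lambda>z. 0) \<in> H \<and>
     (\<forall>f\<in>H. \<forall>g\<in>H. (\<lambda>z. f z + g z) \<in> H) \<and>
     (\<forall>f\<in>H. \<forall>c. (\<lambda>z. c * f z) \<in> H) \<and>
     \<comment> \<open>inner product\<close>
     (\<forall>f\<in>H. \<forall>g\<in>H. \<forall>h\<in>H. ip (\<lambda>z. f z + g z) h = ip f h + ip g h) \<and>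
     (\<forall>f\<in>H. \<forall>g\<in>H. \<forall>c. ip (\<lambda>z. c * f z) g = c * ip f g) \<and>
     (\<forall>f\<in>H. \<forall>g\<in>H. ip g f = cnj (ip f g)) \<and>
     (\<forall>f\<in>H. Im (ip f f) = 0 \<and> Re (ip f f) \<ge> 0) \<and>
     (\<forall>f\<in>H. ip f f = 0 \<longrightarrow> f = (\<lambda>z. 0)) \<and>
     \<comment> \<open>completeness\<close>
     (\<forall>s. (\<forall>n. s n \<in> H) \<longrightarrow>
        (\<forall>e>0. \<exists>N. \<forall>m\<ge>N. \<forall>n\<ge>N. hnorm ip (\<lambda>z. s m z - s n z) < e) \<longrightarrow>
        (\<exists>g\<in>H. (\<lambda>n. hnorm ip (\<lambda>z. s n z - g z)) \<longlonglongrightarrow> 0)) \<and>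
     \<comment> \<open>reproducing kernel\<close>
     (\<forall>w\<in>disc. (\<lambda>z. k z w) \<in> H \<and> (\<forall>f\<in>H. f w = ip f (\<lambda>z. k z w)))"

definition rotation_invariant ::
  "(complex \<Rightarrow> complex) set \<Rightarrow> ((complex \<Rightarrow> complex) \<Rightarrow> (complex \<Rightarrow> complex) \<Rightarrow> complex) \<Rightarrow> bool" where
  "rotation_invariant H ip \<longleftrightarrow>
     (\<forall>h\<in>H. \<forall>\<xi>. cmod \<xi> = 1 \<longrightarrow>
        (\<lambda>z. h (\<xi> * z)) \<in> H \<and> hnorm ip (\<lambda>z. h (\<xi> * z)) = hnorm ip h)"

definition irreducible_kernel :: "(complex \<Rightarrow> complex \<Rightarrow> complex) \<Rightarrow> bool" where
  "irreducible_kernel k \<longleftrightarrow> (\<forall>z\<in>disc. \<forall>w\<in>disc. k z w \<noteq> 0)"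

text \<open>m x m matrices are functions nat \<Rightarrow> nat \<Rightarrow> complex, read on indices < m.\<close>

definition contractive_multiplier ::
  "(complex \<Rightarrow> complex) set \<Rightarrow> ((complex \<Rightarrow> complex) \<Rightarrow> (complex \<Rightarrow> complex) \<Rightarrow> complex)
     \<Rightarrow> nat \<Rightarrow> (complex \<Rightarrow> nat \<Rightarrow> nat \<Rightarrow> complex) \<Rightarrow> bool" where
  "contractive_multiplier H ip m F \<longleftrightarrow>
     (\<forall>f :: nat \<Rightarrow> complex \<Rightarrow> complex. (\<forall>a<m. f a \<in> H) \<longrightarrow>
        (\<forall>a<m. (\<lambda>z. \<Sum>b<m. F z a b * f b z) \<in> H) \<and>
        (\<Sum>a<m. (hnorm ip (\<lambda>z. \<Sum>b<m. F z a b * f b z))\<^sup>2) \<le> (\<Sum>a<m. (hnorm ip (f a))\<^sup>2))"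

definition complete_pick ::
  "(complex \<Rightarrow> complex) set \<Rightarrow> ((complex \<Rightarrow> complex) \<Rightarrow> (complex \<Rightarrow> complex) \<Rightarrow> complex)
     \<Rightarrow> (complex \<Rightarrow> complex \<Rightarrow> complex) \<Rightarrow> bool" where
  "complete_pick H ip k \<longleftrightarrow>
     (\<forall>m::nat. \<forall>n::nat. \<forall>lam :: nat \<Rightarrow> complex. \<forall>A :: nat \<Rightarrow> nat \<Rightarrow> nat \<Rightarrow> complex.
        m \<ge> 1 \<longrightarrow> (\<forall>j<n. lam j \<in> disc) \<longrightarrow>
        \<comment> \<open>positivity of the block matrix [(I - A_j A_l^*) k(lam_j, lam_l)]\<close>
        (\<forall>v :: nat \<Rightarrow> nat \<Rightarrow> complex.
           let q = (\<Sum>j<n. \<Sum>l<n. \<Sum>a<m. \<Sum>b<m.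
                      cnj (v j a) *
                      (((if a = b then 1 else 0) - (\<Sum>c<m. A j a c * cnj (A l b c))) * k (lam j) (lam l))
                      * v l b)
           in Im q = 0 \<and> Re q \<ge> 0) \<longrightarrow>
        (\<exists>F. contractive_multiplier H ip m F \<and>
             (\<forall>j<n. \<forall>a<m. \<forall>b<m. F (lam j) a b = A j a b)))"

text \<open>Embedding in the ball B_d, d \<in> N \<union> {\<infinity>}: points of B_d are square-summable
  sequences of norm < 1, vanishing from index d on (no restriction when d = \<infinity>).\<close>

definition embeds_in :: "(complex \<Rightarrow> complex \<Rightarrow> complex) \<Rightarrow> enat \<Rightarrow> bool" where
  "embeds_in k d \<longleftrightarrow>
     (\<exists>(b :: complex \<Rightarrow> nat \<Rightarrow> complex) (\<delta> :: complex \<Rightarrow> complex).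
        (\<forall>z\<in>disc. (\<forall>i. d \<le> enat i \<longrightarrow> b z i = 0) \<and>
                   summable (\<lambda>i. (cmod (b z i))\<^sup>2) \<and> (\<Sum>i. (cmod (b z i))\<^sup>2) < 1) \<and>
        (\<forall>z\<in>disc. \<delta> z \<noteq> 0) \<and>
        (\<forall>z\<in>disc. \<forall>w\<in>disc.
           k z w = \<delta> z * cnj (\<delta> w) / (1 - (\<Sum>i. b z i * cnj (b w i)))))"

definition embedding_dimension :: "(complex \<Rightarrow> complex \<Rightarrow> complex) \<Rightarrow> enat" where
  "embedding_dimension k = (LEAST d. embeds_in k d)"

end

theory Submission
  imports Defs "HOL-Complex_Analysis.Complex_Analysis"
begin

locale rk =
  fixes H :: "(complex \<Rightarrow> complex) set"
    and ip :: "(complex \<Rightarrow> complex) \<Rightarrow> (complex \<Rightarrow> complex) \<Rightarrow> complex"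
    and k :: "complex \<Rightarrow> complex \<Rightarrow> complex"
  assumes rkhs: "rkhs_disc H ip k"
begin

lemma holo: "f \<in> H \<Longrightarrow> f holomorphic_on disc"
  using rkhs[unfolded rkhs_disc_def, THEN conjunct1] by blast
lemma zero_mem: "(\<lambda>z. 0) \<in> H"
  using rkhs[unfolded rkhs_disc_def, THEN conjunct2, THEN conjunct1] by blast
lemma add_mem: "f \<in> H \<Longrightarrow> g \<in> H \<Longrightarrow> (\<lambda>z. f z + g z) \<in> H"
  using rkhs[unfolded rkhs_disc_def, THEN conjunct2, THEN conjunct2, THEN conjunct1] by blast
lemma smult_mem: "f \<in> H \<Longrightarrow> (\<lambda>z. c * f z) \<in> H"
  using rkhs[unfolded rkhs_disc_def, THEN conjunct2, THEN conjunct2, THEN conjunct2, THEN conjunct1] by blast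
lemma ip_add: "f \<in> H \<Longrightarrow> g \<in> H \<Longrightarrow> h \<in> H \<Longrightarrow> ip (\<lambda>z. f z + g z) h = ip f h + ip g h"
  using rkhs[unfolded rkhs_disc_def, THEN conjunct2, THEN conjunct2, THEN conjunct2, THEN conjunct2, THEN conjunct1] by blast
lemma ip_smult: "f \<in> H \<Longrightarrow> g \<in> H \<Longrightarrow> ip (\<lambda>z. c * f z) g = c * ip f g"
  using rkhs[unfolded rkhs_disc_def, THEN conjunct2, THEN conjunct2, THEN conjunct2, THEN conjunct2, THEN conjunct2, THEN conjunct1] by blast
lemma ip_cnj: "f \<in> H \<Longrightarrow> g \<in> H \<Longrightarrow> ip g f = cnj (ip f g)"
  using rkhs[unfolded rkhs_disc_def, THEN conjunct2, THEN conjunct2, THEN conjunct2, THEN conjunct2, THEN conjunct2, THEN conjunct2, THEN conjunct1] by blast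
lemma ip_pos: "f \<in> H \<Longrightarrow> Im (ip f f) = 0 \<and> Re (ip f f) \<ge> 0"
  using rkhs[unfolded rkhs_disc_def, THEN conjunct2, THEN conjunct2, THEN conjunct2, THEN conjunct2, THEN conjunct2, THEN conjunct2, THEN conjunct2, THEN conjunct1] by blast
lemma ip_zero: "f \<in> H \<Longrightarrow> ip f f = 0 \<Longrightarrow> f = (\<lambda>z. 0)"
  using rkhs[unfolded rkhs_disc_def, THEN conjunct2, THEN conjunct2, THEN conjunct2, THEN conjunct2, THEN conjunct2, THEN conjunct2, THEN conjunct2, THEN conjunct2, THEN conjunct1] by blast
lemma kmem: "w \<in> disc \<Longrightarrow> (\<lambda>z. k z w) \<in> H"
  using rkhs[unfolded rkhs_disc_def, THEN conjunct2, THEN conjunct2, THEN conjunct2, THEN conjunct2, THEN conjunct2, THEN conjunct2, THEN conjunct2, THEN conjunct2, THEN conjunct2, THEN conjunct2] by blast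
lemma reprod: "w \<in> disc \<Longrightarrow> f \<in> H \<Longrightarrow> f w = ip f (\<lambda>z. k z w)"
  using rkhs[unfolded rkhs_disc_def, THEN conjunct2, THEN conjunct2, THEN conjunct2, THEN conjunct2, THEN conjunct2, THEN conjunct2, THEN conjunct2, THEN conjunct2, THEN conjunct2, THEN conjunct2] by blast

lemma sum_mem: "finite A \<Longrightarrow> (\<And>i. i \<in> A \<Longrightarrow> g i \<in> H) \<Longrightarrow> (\<lambda>z. \<Sum>i\<in>A. c i * g i z) \<in> H"
proof (induction A rule: finite_induct)
  case empty then show ?case using zero_mem by simp
next
  case (insert x F)
  then show ?case using add_mem[OF smult_mem[of "g x" "c x"], of "\<lambda>z. \<Sum>i\<in>F. c i * g i z"] by simp
qed

lemma ip_zero_left: "g \<in> H \<Longrightarrow> ip (\<lambda>z. 0) g = 0"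
  using ip_smult[OF zero_mem, of g 0] by simp

lemma ip_sum_left: "finite A \<Longrightarrow> (\<And>i. i \<in> A \<Longrightarrow> g i \<in> H) \<Longrightarrow> h \<in> H \<Longrightarrow>
   ip (\<lambda>z. \<Sum>i\<in>A. c i * g i z) h = (\<Sum>i\<in>A. c i * ip (g i) h)"
proof (induction A rule: finite_induct)
  case empty then show ?case using ip_zero_left by simp
next
  case (insert x F)
  have "ip (\<lambda>z. \<Sum>i\<in>insert x F. c i * g i z) h = ip (\<lambda>z. c x * g x z + (\<Sum>i\<in>F. c i * g i z)) h"
    using insert by simp
  also have "\<dots> = ip (\<lambda>z. c x * g x z) h + ip (\<lambda>z. \<Sum>i\<in>F. c i * g i z) h"
    using insert by (intro ip_add smult_mem sum_mem) auto
  also have "\<dots> = c x * ip (g x) h + (\<Sum>i\<in>F. c i * ip (g i) h)"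
    using insert by (simp add: ip_smult)
  finally show ?case using insert by simp
qed

lemma ip_sum_right: "finite A \<Longrightarrow> (\<And>i. i \<in> A \<Longrightarrow> g i \<in> H) \<Longrightarrow> h \<in> H \<Longrightarrow>
   ip h (\<lambda>z. \<Sum>i\<in>A. c i * g i z) = (\<Sum>i\<in>A. cnj (c i) * ip h (g i))"
proof -
  assume a: "finite A" "\<And>i. i \<in> A \<Longrightarrow> g i \<in> H" "h \<in> H"
  have "ip h (\<lambda>z. \<Sum>i\<in>A. c i * g i z) = cnj (ip (\<lambda>z. \<Sum>i\<in>A. c i * g i z) h)"
    using a by (intro ip_cnj sum_mem) auto
  also have "\<dots> = cnj (\<Sum>i\<in>A. c i * ip (g i) h)" using a by (simp add: ip_sum_left)
  also have "\<dots> = (\<Sum>i\<in>A. cnj (c i) * ip h (g i))"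
    unfolding cnj_sum complex_cnj_mult by (rule sum.cong) (use a in \<open>auto simp: ip_cnj[of _ h]\<close>)
  finally show ?thesis .
qed

lemma diff_mem: "f \<in> H \<Longrightarrow> g \<in> H \<Longrightarrow> (\<lambda>z. f z - g z) \<in> H"
  using add_mem[OF _ smult_mem[of g "-1"], of f] by simp

lemma ip_diff_diff: assumes "f \<in> H" "g \<in> H"
  shows "ip (\<lambda>z. f z - g z) (\<lambda>z. f z - g z) = ip f f - ip f g - ip g f + ip g g"
proof -
  let ?A = "{0::nat,1}"
  let ?c = "\<lambda>i::nat. if i = 0 then (1::complex) else -1"
  let ?g = "\<lambda>i::nat. if i = 0 then f else g"
  have e: "(\<lambda>z. f z - g z) = (\<lambda>z. \<Sum>i\<in>?A. ?c i * ?g i z)" by simp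
  have m: "\<And>i. i \<in> ?A \<Longrightarrow> ?g i \<in> H" using assms by auto
  have "ip (\<lambda>z. \<Sum>i\<in>?A. ?c i * ?g i z) (\<lambda>z. \<Sum>i\<in>?A. ?c i * ?g i z)
     = (\<Sum>i\<in>?A. ?c i * ip (?g i) (\<lambda>z. \<Sum>i\<in>?A. ?c i * ?g i z))"
    by (rule ip_sum_left[OF _ m]) (use assms in \<open>auto intro!: diff_mem\<close>)
  also have "\<dots> = (\<Sum>i\<in>?A. ?c i * (\<Sum>j\<in>?A. cnj (?c j) * ip (?g i) (?g j)))"
    using m by (intro sum.cong refl arg_cong2[where f="(*)"] ip_sum_right) auto
  finally show ?thesis unfolding e by simp
qed

lemma k_ip: "z \<in> disc \<Longrightarrow> w \<in> disc \<Longrightarrow> k z w = ip (\<lambda>x. k x w) (\<lambda>x. k x z)"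
  using reprod[OF _ kmem] by blast

lemma k_herm: "z \<in> disc \<Longrightarrow> w \<in> disc \<Longrightarrow> k z w = cnj (k w z)"
  using k_ip[of z w] k_ip[of w z] ip_cnj[OF kmem kmem, of z w] by simp

lemma k_diag: "z \<in> disc \<Longrightarrow> Im (k z z) = 0 \<and> Re (k z z) \<ge> 0"
  using k_ip[of z z] ip_pos[OF kmem, of z] by simp

lemma ip_real: "f \<in> H \<Longrightarrow> ip f f = of_real (Re (ip f f))"
  using ip_pos[of f] by (simp add: complex_eq_iff)

lemma hnorm_sq: "f \<in> H \<Longrightarrow> (hnorm ip f)^2 = Re (ip f f)"
  unfolding hnorm_def using ip_pos by simp

end

locale rk2 = rk +
  assumes rot: "rotation_invariant H ip" and irr: "irreducible_kernel k"
begin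

lemma rot_mem: "h \<in> H \<Longrightarrow> cmod \<xi> = 1 \<Longrightarrow> (\<lambda>z. h (\<xi> * z)) \<in> H"
  using rot unfolding rotation_invariant_def by blast

lemma rot_ip: assumes "h \<in> H" "cmod \<xi> = 1"
  shows "ip (\<lambda>z. h (\<xi> * z)) (\<lambda>z. h (\<xi> * z)) = ip h h"
proof -
  have "hnorm ip (\<lambda>z. h (\<xi> * z)) = hnorm ip h"
    using rot assms unfolding rotation_invariant_def by blast
  then have "Re (ip (\<lambda>z. h (\<xi> * z)) (\<lambda>z. h (\<xi> * z))) = Re (ip h h)"
    using hnorm_sq[OF rot_mem[OF assms]] hnorm_sq[OF assms(1)] by metis
  then show ?thesis using ip_real[OF rot_mem[OF assms]] ip_real[OF assms(1)] by metis
qed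

lemma disc_mult: "cmod \<xi> = 1 \<Longrightarrow> w \<in> disc \<Longrightarrow> \<xi> * w \<in> disc"
  by (simp add: norm_mult)

lemma rot_aux: assumes "cmod \<xi> = 1" "w \<in> disc"
  shows "ip (\<lambda>z. k (\<xi> * z) (\<xi> * w) - k z w) (\<lambda>z. k (\<xi> * z) (\<xi> * w) - k z w)
          = k w w - k (\<xi> * w) (\<xi> * w)"
proof -
  have xw: "\<xi> * w \<in> disc" using disc_mult assms by blast
  define g where "g = (\<lambda>z. k (\<xi> * z) (\<xi> * w))"
  have gH: "g \<in> H" unfolding g_def using rot_mem[OF kmem[OF xw] assms(1)] .
  have kw: "(\<lambda>z. k z w) \<in> H" using kmem assms by blast
  have 1: "ip g g = k (\<xi> * w) (\<xi> * w)"
    unfolding g_def using rot_ip[OF kmem[OF xw] assms(1)] k_ip[OF xw xw] by simp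
  have 2: "ip g (\<lambda>z. k z w) = k (\<xi> * w) (\<xi> * w)"
    using reprod[OF assms(2) gH] unfolding g_def by simp
  have r: "cnj (k (\<xi> * w) (\<xi> * w)) = k (\<xi> * w) (\<xi> * w)"
    using k_diag[OF xw] by (simp add: complex_eq_iff)
  have 3: "ip (\<lambda>z. k z w) g = k (\<xi> * w) (\<xi> * w)"
    using ip_cnj[OF gH kw] 2 r by simp
  have 4: "ip (\<lambda>z. k z w) (\<lambda>z. k z w) = k w w" using k_ip[OF assms(2) assms(2)] by simp
  have "ip (\<lambda>z. g z - k z w) (\<lambda>z. g z - k z w) = k w w - k (\<xi> * w) (\<xi> * w)"
    unfolding ip_diff_diff[OF gH kw] 1 2 3 4 by simp
  then show ?thesis unfolding g_def .
qed

lemma k_rot: assumes "cmod \<xi> = 1" "w \<in> disc"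
  shows "(\<lambda>z. k (\<xi> * z) (\<xi> * w)) = (\<lambda>z. k z w)"
proof -
  have xw: "\<xi> * w \<in> disc" using disc_mult assms by blast
  have c1: "cmod (cnj \<xi>) = 1" using assms by simp
  have cc: "cnj \<xi> * (\<xi> * w) = w"
  proof -
    have "\<xi> * cnj \<xi> = 1" using complex_norm_square[of \<xi>] assms by simp
    then show ?thesis by (simp add: mult.assoc[symmetric] mult.commute)
  qed
  have DH: "(\<lambda>z. k (\<xi> * z) (\<xi> * w) - k z w) \<in> H"
    by (intro diff_mem rot_mem kmem xw assms)
  have a: "Re (k w w - k (\<xi> * w) (\<xi> * w)) \<ge> 0"
    using rot_aux[OF assms] ip_pos[OF DH] by simp
  have b0: "Re (k (\<xi> * w) (\<xi> * w) - k (cnj \<xi> * (\<xi> * w)) (cnj \<xi> * (\<xi> * w))) \<ge> 0"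
  proof -
    have D2: "(\<lambda>z. k (cnj \<xi> * z) (cnj \<xi> * (\<xi> * w)) - k z (\<xi> * w)) \<in> H"
      by (intro diff_mem rot_mem kmem xw c1 disc_mult)
    show ?thesis using rot_aux[OF c1 xw] ip_pos[OF D2] by simp
  qed
  have b: "Re (k (\<xi> * w) (\<xi> * w) - k w w) \<ge> 0" using b0 cc by simp
  have "k w w - k (\<xi> * w) (\<xi> * w) = 0"
    using a b k_diag[OF xw] k_diag[OF assms(2)] by (simp add: complex_eq_iff)
  then have "ip (\<lambda>z. k (\<xi> * z) (\<xi> * w) - k z w) (\<lambda>z. k (\<xi> * z) (\<xi> * w) - k z w) = 0"
    using rot_aux[OF assms] by simp
  from ip_zero[OF DH this] show ?thesis
    by (simp add: fun_eq_iff)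
qed

lemma k_rot': "cmod \<xi> = 1 \<Longrightarrow> w \<in> disc \<Longrightarrow> k (\<xi> * z) (\<xi> * w) = k z w"
  using k_rot by metis

end

lemma convex_aux: "convex {\<zeta>::complex. cmod (\<zeta> * z) < 1}"
  unfolding convex_def
proof (intro ballI allI impI)
  fix x y :: complex and u v :: real
  assume x: "x \<in> {\<zeta>. cmod (\<zeta> * z) < 1}" and y: "y \<in> {\<zeta>. cmod (\<zeta> * z) < 1}"
    and uv: "0 \<le> u" "0 \<le> v" "u + v = 1"
  have "cmod ((u *\<^sub>R x + v *\<^sub>R y) * z) = cmod (u *\<^sub>R (x * z) + v *\<^sub>R (y * z))"
    by (simp add: algebra_simps scaleR_conv_of_real)
  also have "\<dots> \<le> u * cmod (x * z) + v * cmod (y * z)"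
    using uv by (metis (no_types, lifting) abs_of_nonneg norm_scaleR norm_triangle_ineq)
  also have "\<dots> < 1"
  proof -
    have "u * cmod (x * z) \<le> u" "v * cmod (y * z) \<le> v"
      using x y uv by (auto intro: mult_left_le)
    moreover have "u * cmod (x * z) < u \<or> v * cmod (y * z) < v"
      using x y uv by (cases "u = 0") auto
    ultimately show ?thesis using uv by linarith
  qed
  finally show "u *\<^sub>R x + v *\<^sub>R y \<in> {\<zeta>. cmod (\<zeta> * z) < 1}" by simp
qed

lemma open_aux: "open {\<zeta>::complex. cmod (\<zeta> * z) < 1}"
  by (intro open_Collect_less continuous_intros)

lemma one_limpt_sphere: "(1::complex) islimpt sphere 0 1"
proof (rule connected_imp_perfect)
  show "connected (sphere (0::complex) 1)" by (rule connected_sphere) simp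
  show "(1::complex) \<in> sphere 0 1" by simp
  show "\<And>x. sphere (0::complex) 1 \<noteq> {x}"
  proof
    fix x assume "sphere (0::complex) 1 = {x}"
    moreover have "(1::complex) \<in> sphere 0 1" "(-1::complex) \<in> sphere 0 1" by auto
    ultimately show False by auto
  qed
qed

context rk2 begin

lemma ID: assumes z: "z \<in> disc" and w: "w \<in> disc" and zz: "cmod (\<zeta> * z) < 1" and ww: "cmod (\<zeta> * w) < 1"
  shows "k (\<zeta> * z) w = k z (cnj \<zeta> * w)"
proof -
  define S where "S = {\<zeta>::complex. cmod (\<zeta> * z) < 1} \<inter> {\<zeta>. cmod (\<zeta> * w) < 1}"
  have oS: "open S" unfolding S_def by (intro open_Int open_aux)
  have cS: "connected S" unfolding S_def by (intro convex_connected convex_Int convex_aux)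
  have inS: "\<zeta> \<in> S" using zz ww unfolding S_def by simp
  have sph: "sphere 0 1 \<subseteq> S" using z w unfolding S_def by (auto simp: norm_mult)
  have oneS: "1 \<in> S" using z w unfolding S_def by simp
  define q where "q = (\<lambda>y. k (y * w) z)"
  have hq: "q holomorphic_on cnj ` S"
  proof -
    have "(\<lambda>y. k y z) \<circ> (\<lambda>y. y * w) holomorphic_on cnj ` S"
      by (rule holomorphic_on_compose_gen[where t = disc])
         (auto intro!: holomorphic_intros holo kmem z simp: S_def norm_mult)
    then show ?thesis unfolding q_def o_def .
  qed
  have h1: "(\<lambda>\<zeta>. k (\<zeta> * z) w) holomorphic_on S"
  proof -
    have "(\<lambda>y. k y w) \<circ> (\<lambda>y. y * z) holomorphic_on S"
      by (rule holomorphic_on_compose_gen[where t = disc])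
         (auto intro!: holomorphic_intros holo kmem w simp: S_def norm_mult)
    then show ?thesis unfolding o_def .
  qed
  have h2: "cnj \<circ> q \<circ> cnj holomorphic_on S"
    by (rule holomorphic_on_compose_cnj_cnj[OF hq oS])
  have eqS: "k z (cnj x * w) = (cnj \<circ> q \<circ> cnj) x" if "x \<in> S" for x
  proof -
    have "cnj x * w \<in> disc" using that unfolding S_def by (simp add: norm_mult)
    then show ?thesis unfolding q_def o_def using k_herm[OF z] by simp
  qed
  have hf: "(\<lambda>x. k (x * z) w - k z (cnj x * w)) holomorphic_on S"
    using holomorphic_on_diff[OF h1 h2] holomorphic_cong[OF refl eqS] 
    by (smt (verit, ccfv_SIG) holomorphic_cong eqS)
  have "k (\<zeta> * z) w - k z (cnj \<zeta> * w) = 0"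
  proof (rule analytic_continuation[OF hf oS cS sph oneS one_limpt_sphere _ inS])
    fix x :: complex assume "x \<in> sphere 0 1"
    then have x1: "cmod (cnj x) = 1" by simp
    have "cnj x * (x * z) = z"
      using complex_norm_square[of x] x1 by (simp add: mult.assoc[symmetric] mult.commute)
    then have "k z (cnj x * w) = k (x * z) w" using k_rot'[OF x1 w, of "x * z"] by metis
    then show "k (x * z) w - k z (cnj x * w) = 0" by simp
  qed
  then show ?thesis by simp
qed

end

context rk2 begin

lemma scale: assumes z: "z \<in> disc" and w: "w \<in> disc" and c: "cmod (z * cnj w) < c" "c < 1"
  shows "k z w = k (z * cnj w / of_real c) (of_real c)"
proof -
  have c0: "c > 0" using c(1) by (smt (verit) norm_ge_zero)
  have cd: "complex_of_real c \<in> disc" using c c0 by simp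
  define \<zeta> where "\<zeta> = cnj w / of_real c"
  have 1: "cmod (\<zeta> * z) < 1" using c c0 unfolding \<zeta>_def
    by (simp add: norm_mult norm_divide divide_less_eq mult.commute)
  have 2: "cmod (\<zeta> * of_real c) < 1" using w c0 unfolding \<zeta>_def by (simp add: norm_mult norm_divide)
  have "k (\<zeta> * z) (of_real c) = k z (cnj \<zeta> * of_real c)" by (rule ID[OF z cd 1 2])
  moreover have "cnj \<zeta> * of_real c = w" unfolding \<zeta>_def using c0 by simp
  moreover have "\<zeta> * z = z * cnj w / of_real c" unfolding \<zeta>_def by simp
  ultimately show ?thesis by simp
qed

definition cc :: "complex \<Rightarrow> real" where "cc t = (1 + cmod t) / 2"
definition G :: "complex \<Rightarrow> complex" where "G t = k (t / of_real (cc t)) (of_real (cc t))"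

lemma cc_bounds: "cmod t < 1 \<Longrightarrow> cmod t < cc t \<and> cc t < 1"
  unfolding cc_def by simp

lemma kG: assumes "z \<in> disc" "w \<in> disc" shows "k z w = G (z * cnj w)"
proof -
  have "cmod z * cmod w \<le> cmod z" using assms by (intro mult_left_le) auto
  then have t: "cmod (z * cnj w) < 1" using assms by (simp add: norm_mult)
  show ?thesis unfolding G_def using scale[OF assms] cc_bounds[OF t] by blast
qed

lemma G_local: assumes "cmod t0 < 1" "cmod t < cc t0"
  shows "G t = k (t / of_real (cc t0)) (of_real (cc t0))"
proof -
  have b: "cmod t0 < cc t0" "cc t0 < 1" using cc_bounds[OF assms(1)] by auto
  have c0: "cc t0 > 0" using b by (smt (verit) norm_ge_zero)
  have z: "t / of_real (cc t0) \<in> disc" using assms(2) c0 by (simp add: norm_divide)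
  have w: "complex_of_real (cc t0) \<in> disc" using b c0 by simp
  have e: "t / of_real (cc t0) * cnj (of_real (cc t0)) = t" using c0 by simp
  have "k (t / of_real (cc t0)) (of_real (cc t0)) = G t" using kG[OF z w] e by simp
  then show ?thesis by simp
qed

lemma G_holo: "G holomorphic_on disc"
proof -
  have "\<exists>f'. (G has_field_derivative f') (at t0)" if t0: "t0 \<in> disc" for t0
  proof -
    have b: "cmod t0 < cc t0" "cc t0 < 1" using cc_bounds t0 by auto
    have c0: "cc t0 > 0" using b by (smt (verit) norm_ge_zero)
    have "(\<lambda>y. k y (of_real (cc t0))) \<circ> (\<lambda>t. t / of_real (cc t0)) holomorphic_on ball 0 (cc t0)"
      by (rule holomorphic_on_compose_gen[where t = disc])
         (use b c0 in \<open>auto intro!: holomorphic_intros holo kmem simp: norm_divide\<close>)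
    then have "G holomorphic_on ball 0 (cc t0)"
      by (rule holomorphic_cong[THEN iffD1, rotated 2]) (use G_local t0 in auto)
    then have "G field_differentiable (at t0)"
      by (rule holomorphic_on_imp_differentiable_at) (use b in auto)
    then show ?thesis by (simp add: field_differentiable_def)
  qed
  then show ?thesis by (simp add: holomorphic_on_open)
qed

lemma disc_prod: "t \<in> disc \<Longrightarrow> \<exists>z w. z \<in> disc \<and> w \<in> disc \<and> t = z * cnj w"
proof -
  assume t: "t \<in> disc"
  have b: "cmod t < cc t" "cc t < 1" using cc_bounds t by auto
  have c0: "cc t > 0" using b by (smt (verit) norm_ge_zero)
  show ?thesis
    by (rule exI[of _ "t / of_real (cc t)"], rule exI[of _ "of_real (cc t)"]) (use b c0 in \<open>auto simp: norm_divide\<close>)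
qed

lemma G_nz: "t \<in> disc \<Longrightarrow> G t \<noteq> 0"
  using disc_prod kG irr unfolding irreducible_kernel_def by metis

definition a0 :: complex where "a0 = k 0 0"

lemma G0: "G 0 = a0" using kG[of 0 0] unfolding a0_def by simp

lemma a0_pos: "Im a0 = 0 \<and> Re a0 > 0"
proof -
  have "k 0 0 \<noteq> 0" using irr unfolding irreducible_kernel_def by simp
  then show ?thesis using k_diag[of 0] unfolding a0_def by (auto simp: complex_eq_iff)
qed

lemma a0_real: "a0 = of_real (Re a0)" using a0_pos by (simp add: complex_eq_iff)
lemma a0_nz: "a0 \<noteq> 0" using a0_pos by auto

lemma k_z0: "z \<in> disc \<Longrightarrow> k z 0 = a0" using kG[of z 0] G0 by simp
lemma k_0w: "w \<in> disc \<Longrightarrow> k 0 w = a0" using kG[of 0 w] G0 by simp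

definition phi :: "complex \<Rightarrow> complex" where "phi t = 1 - a0 / G t"

lemma phi_holo: "phi holomorphic_on disc"
  unfolding phi_def using G_holo G_nz by (intro holomorphic_intros) auto

lemma phi_k: "z \<in> disc \<Longrightarrow> w \<in> disc \<Longrightarrow> phi (z * cnj w) = 1 - a0 / k z w"
  unfolding phi_def using kG by simp

definition dd :: "nat \<Rightarrow> complex" where "dd n = (deriv ^^ n) phi 0 / fact n"

lemma phi_sums: "t \<in> disc \<Longrightarrow> (\<lambda>n. dd n * t ^ n) sums phi t"
  unfolding dd_def using holomorphic_power_series[OF phi_holo, of t] by simp

lemma phi0: "phi 0 = 0" unfolding phi_def G0 using a0_nz by simp

lemma dd0: "dd 0 = 0" unfolding dd_def using phi0 by simp

lemma k_nz: "z \<in> disc \<Longrightarrow> w \<in> disc \<Longrightarrow> k z w \<noteq> 0"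
  using irr unfolding irreducible_kernel_def by blast

lemma k_diag_pos: "z \<in> disc \<Longrightarrow> Im (k z z) = 0 \<and> Re (k z z) > 0"
  using k_diag k_nz by (fastforce simp: complex_eq_iff)

end

lemma sum_swap3: "(\<Sum>j\<in>A. \<Sum>l\<in>B. \<Sum>a\<in>C. X j l a) = (\<Sum>a\<in>C. \<Sum>j\<in>A. \<Sum>l\<in>B. X j l a)"
proof -
  have "(\<Sum>j\<in>A. \<Sum>l\<in>B. \<Sum>a\<in>C. X j l a) = (\<Sum>j\<in>A. \<Sum>a\<in>C. \<Sum>l\<in>B. X j l a)"
    by (rule sum.cong[OF refl], rule sum.swap)
  also have "\<dots> = (\<Sum>a\<in>C. \<Sum>j\<in>A. \<Sum>l\<in>B. X j l a)" by (rule sum.swap)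
  finally show ?thesis .
qed

lemma inner_id:
  "(\<Sum>a\<in>A. \<Sum>b\<in>B. cnj (p a) * (\<Sum>c\<in>C. P a c * cnj (R b c)) * q b)
   = (\<Sum>c\<in>C. (\<Sum>a\<in>A. cnj (p a) * P a c) * (\<Sum>b\<in>B. cnj (R b c) * q b))"
proof -
  have "(\<Sum>a\<in>A. \<Sum>b\<in>B. cnj (p a) * (\<Sum>c\<in>C. P a c * cnj (R b c)) * q b)
      = (\<Sum>a\<in>A. \<Sum>b\<in>B. \<Sum>c\<in>C. cnj (p a) * P a c * (cnj (R b c) * q b))"
    by (simp add: sum_distrib_left sum_distrib_right mult_ac)
  also have "\<dots> = (\<Sum>c\<in>C. \<Sum>a\<in>A. \<Sum>b\<in>B. cnj (p a) * P a c * (cnj (R b c) * q b))"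
    by (rule sum_swap3)
  also have "\<dots> = (\<Sum>c\<in>C. (\<Sum>a\<in>A. cnj (p a) * P a c) * (\<Sum>b\<in>B. cnj (R b c) * q b))"
    by (simp add: sum_product)
  finally show ?thesis .
qed

definition pq :: "(complex \<Rightarrow> complex \<Rightarrow> complex) \<Rightarrow> nat \<Rightarrow> nat \<Rightarrow> (nat \<Rightarrow> complex)
   \<Rightarrow> (nat \<Rightarrow> nat \<Rightarrow> nat \<Rightarrow> complex) \<Rightarrow> (nat \<Rightarrow> nat \<Rightarrow> complex) \<Rightarrow> complex" where
  "pq k m n lam A v = (\<Sum>j<n. \<Sum>l<n. \<Sum>a<m. \<Sum>b<m.
                      cnj (v j a) *
                      (((if a = b then 1 else 0) - (\<Sum>c<m. A j a c * cnj (A l b c))) * k (lam j) (lam l))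
                      * v l b)"

lemma pq_split: "pq k m n lam A v =
   (\<Sum>a<m. \<Sum>j<n. \<Sum>l<n. cnj (v j a) * k (lam j) (lam l) * v l a)
 - (\<Sum>c<m. \<Sum>j<n. \<Sum>l<n. cnj (\<Sum>a<m. cnj (A j a c) * v j a) * k (lam j) (lam l) * (\<Sum>b<m. cnj (A l b c) * v l b))"
proof -
  have e1: "cnj (v j a) * (((if a = b then 1 else 0) - S) * K) * v l b
      = (if a = b then cnj (v j a) * K * v l a else 0) - cnj (v j a) * S * v l b * K" for j l a b S K
    by (simp add: algebra_simps)
  have "pq k m n lam A v = (\<Sum>j<n. \<Sum>l<n. \<Sum>a<m. \<Sum>b<m.
           (if a = b then cnj (v j a) * k (lam j) (lam l) * v l a else 0)
         - cnj (v j a) * (\<Sum>c<m. A j a c * cnj (A l b c)) * v l b * k (lam j) (lam l))"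
    unfolding pq_def e1 ..
  also have "\<dots> = (\<Sum>j<n. \<Sum>l<n. (\<Sum>a<m. cnj (v j a) * k (lam j) (lam l) * v l a)
         - (\<Sum>a<m. \<Sum>b<m. cnj (v j a) * (\<Sum>c<m. A j a c * cnj (A l b c)) * v l b) * k (lam j) (lam l))"
    by (simp add: sum_subtractf sum_distrib_right)
  also have "\<dots> = (\<Sum>j<n. \<Sum>l<n. (\<Sum>a<m. cnj (v j a) * k (lam j) (lam l) * v l a)
         - (\<Sum>c<m. (\<Sum>a<m. cnj (v j a) * A j a c) * (\<Sum>b<m. cnj (A l b c) * v l b)) * k (lam j) (lam l))"
    by (simp only: inner_id)
  also have "\<dots> = (\<Sum>j<n. \<Sum>l<n. \<Sum>a<m. cnj (v j a) * k (lam j) (lam l) * v l a)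
         - (\<Sum>j<n. \<Sum>l<n. \<Sum>c<m. cnj (\<Sum>a<m. cnj (A j a c) * v j a) * k (lam j) (lam l) * (\<Sum>b<m. cnj (A l b c) * v l b))"
  proof -
    have h: "(\<Sum>c<m. (\<Sum>a<m. cnj (v j a) * A j a c) * (\<Sum>b<m. cnj (A l b c) * v l b)) * K
       = (\<Sum>c<m. cnj (\<Sum>a<m. cnj (A j a c) * v j a) * K * (\<Sum>b<m. cnj (A l b c) * v l b))" for j l K
    proof -
      have "cnj (\<Sum>a<m. cnj (A j a c) * v j a) = (\<Sum>a<m. cnj (v j a) * A j a c)" for c
        by (simp add: cnj_sum mult.commute)
      then show ?thesis by (simp add: sum_distrib_right mult_ac) (simp add: sum_distrib_left)
    qed
    show ?thesis unfolding h sum_subtractf ..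
  qed
  also have "\<dots> = (\<Sum>a<m. \<Sum>j<n. \<Sum>l<n. cnj (v j a) * k (lam j) (lam l) * v l a)
 - (\<Sum>c<m. \<Sum>j<n. \<Sum>l<n. cnj (\<Sum>a<m. cnj (A j a c) * v j a) * k (lam j) (lam l) * (\<Sum>b<m. cnj (A l b c) * v l b))"
    by (rule arg_cong2[where f="(-)"]; rule sum_swap3)
  finally show ?thesis .
qed


context rk begin

lemma kcomb_mem: assumes "\<And>l. l < (N::nat) \<Longrightarrow> \<nu> l \<in> disc" shows "(\<lambda>z. \<Sum>l<N. x l * k z (\<nu> l)) \<in> H"
proof -
  have "(\<lambda>z. \<Sum>l\<in>{..<N}. x l * (\<lambda>z. k z (\<nu> l)) z) \<in> H"
    by (rule sum_mem) (auto intro: kmem assms)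
  then show ?thesis by simp
qed

lemma ip_kcomb: assumes "u \<in> H" "\<And>l. l < (N::nat) \<Longrightarrow> \<nu> l \<in> disc"
  shows "ip u (\<lambda>z. \<Sum>l<N. x l * k z (\<nu> l)) = (\<Sum>l<N. cnj (x l) * u (\<nu> l))"
proof -
  have "ip u (\<lambda>z. \<Sum>l\<in>{..<N}. x l * (\<lambda>z. k z (\<nu> l)) z) = (\<Sum>l\<in>{..<N}. cnj (x l) * ip u (\<lambda>z. k z (\<nu> l)))"
    by (rule ip_sum_right) (use assms in \<open>auto intro: kmem\<close>)
  then have "ip u (\<lambda>z. \<Sum>l<N. x l * k z (\<nu> l)) = (\<Sum>l<N. cnj (x l) * ip u (\<lambda>z. k z (\<nu> l)))"
    by simp
  also have "\<dots> = (\<Sum>l<N. cnj (x l) * u (\<nu> l))"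
    using assms reprod by simp
  finally show ?thesis .
qed

lemma ip_kk: assumes "\<And>l. l < (N::nat) \<Longrightarrow> \<nu> l \<in> disc"
  shows "ip (\<lambda>z. \<Sum>l<N. x l * k z (\<nu> l)) (\<lambda>z. \<Sum>l<N. w l * k z (\<nu> l))
     = (\<Sum>j<N. \<Sum>l<N. cnj (w j) * k (\<nu> j) (\<nu> l) * x l)"
  using ip_kcomb[OF kcomb_mem[OF assms] assms, where x = w]
  by (simp add: sum_distrib_left sum_distrib_right mult_ac)

lemma mult_nec:
  assumes cm: "contractive_multiplier H ip m F" and nu: "\<And>j. j < N \<Longrightarrow> \<nu> j \<in> disc"
  shows "Im (pq k m N \<nu> (\<lambda>j. F (\<nu> j)) y) = 0 \<and> Re (pq k m N \<nu> (\<lambda>j. F (\<nu> j)) y) \<ge> 0"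
proof -
  define Y where "Y l c = (\<Sum>b<m. cnj (F (\<nu> l) b c) * y l b)" for l c
  define f where "f a = (\<lambda>z. \<Sum>l<N. y l a * k z (\<nu> l))" for a
  define h where "h c = (\<lambda>z. \<Sum>l<N. Y l c * k z (\<nu> l))" for c
  define Mh where "Mh a = (\<lambda>z. \<Sum>b<m. F z a b * h b z)" for a
  have fH: "f a \<in> H" for a unfolding f_def by (rule kcomb_mem[OF nu])
  have hH: "h a \<in> H" for a unfolding h_def by (rule kcomb_mem[OF nu])
  have cm': "(\<forall>a<m. Mh a \<in> H) \<and> (\<Sum>a<m. (hnorm ip (Mh a))\<^sup>2) \<le> (\<Sum>a<m. (hnorm ip (h a))\<^sup>2)"
    using cm hH unfolding contractive_multiplier_def Mh_def by blast
  have MH: "a < m \<Longrightarrow> Mh a \<in> H" for a using cm' by blast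
  define FF where "FF = (\<Sum>a<m. ip (f a) (f a))"
  define HH where "HH = (\<Sum>a<m. ip (h a) (h a))"
  define MM where "MM = (\<Sum>a<m. ip (Mh a) (Mh a))"
  define X where "X = (\<Sum>a<m. ip (Mh a) (f a))"
  have FFe: "FF = (\<Sum>a<m. \<Sum>j<N. \<Sum>l<N. cnj (y j a) * k (\<nu> j) (\<nu> l) * y l a)"
    unfolding FF_def f_def by (rule sum.cong[OF refl], rule ip_kk[OF nu])
  have HHe: "HH = (\<Sum>c<m. \<Sum>j<N. \<Sum>l<N. cnj (Y j c) * k (\<nu> j) (\<nu> l) * Y l c)"
    unfolding HH_def h_def by (rule sum.cong[OF refl], rule ip_kk[OF nu])
  have pqe: "pq k m N \<nu> (\<lambda>j. F (\<nu> j)) y = FF - HH"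
    unfolding pq_split FFe HHe Y_def ..
  have FFr: "Im FF = 0" unfolding FF_def using ip_pos[OF fH] by (simp add: Im_sum)
  have HHr: "Im HH = 0" unfolding HH_def using ip_pos[OF hH] by (simp add: Im_sum)
  have MMle: "Re MM \<le> Re HH"
    using cm' unfolding MM_def HH_def by (simp add: Re_sum hnorm_sq MH hH)
  have XH: "X = HH"
  proof -
    have "X = (\<Sum>a<m. \<Sum>l<N. cnj (y l a) * (\<Sum>b<m. F (\<nu> l) a b * h b (\<nu> l)))"
      unfolding X_def f_def using ip_kcomb[OF MH nu] by (simp add: Mh_def)
    also have "\<dots> = (\<Sum>a<m. \<Sum>l<N. \<Sum>b<m. cnj (y l a) * F (\<nu> l) a b * h b (\<nu> l))"
      by (simp add: sum_distrib_left mult_ac)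
    also have "\<dots> = (\<Sum>b<m. \<Sum>a<m. \<Sum>l<N. cnj (y l a) * F (\<nu> l) a b * h b (\<nu> l))"
      by (rule sum_swap3)
    also have "\<dots> = (\<Sum>b<m. \<Sum>l<N. \<Sum>a<m. cnj (y l a) * F (\<nu> l) a b * h b (\<nu> l))"
      by (rule sum.cong[OF refl], rule sum.swap)
    also have "\<dots> = HH"
      unfolding HH_def
    proof (rule sum.cong[OF refl])
      fix b
      have e: "ip u (h b) = (\<Sum>l<N. cnj (Y l b) * u (\<nu> l))" if "u \<in> H" for u
        using ip_kcomb[OF that nu] unfolding h_def .
      show "(\<Sum>l<N. \<Sum>a<m. cnj (y l a) * F (\<nu> l) a b * h b (\<nu> l)) = ip (h b) (h b)"
        unfolding e[OF hH] by (simp add: Y_def cnj_sum sum_distrib_right mult_ac) (simp add: sum_distrib_left mult_ac)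
    qed
    finally show ?thesis .
  qed
  have "0 \<le> Re (\<Sum>a<m. ip (\<lambda>z. f a z - Mh a z) (\<lambda>z. f a z - Mh a z))"
    unfolding Re_sum by (rule sum_nonneg) (use ip_pos[OF diff_mem[OF fH MH]] in auto)
  also have "\<dots> = Re FF - Re (\<Sum>a<m. ip (f a) (Mh a)) - Re X + Re MM"
    unfolding FF_def X_def MM_def using ip_diff_diff[OF fH MH]
    by (simp add: Re_sum sum_subtractf sum.distrib)
  also have "Re (\<Sum>a<m. ip (f a) (Mh a)) = Re X"
    unfolding X_def using ip_cnj[OF MH fH] by (simp add: Re_sum)
  finally have "0 \<le> Re FF - 2 * Re HH + Re MM" using XH by simp
  then have "Re HH \<le> Re FF" using MMle by simp
  then show ?thesis using pqe FFr HHr by simp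
qed

end

lemma quad_sparse:
  fixes M :: nat
  assumes P: "P \<subseteq> {..<M}" and Y: "\<And>i. i \<notin> P \<Longrightarrow> Y i = 0"
  shows "(\<Sum>i<M. \<Sum>l<M. cnj (Y i) * B i l * Y l) = (\<Sum>i\<in>P. \<Sum>l\<in>P. cnj (Y i) * B i l * Y l)"
proof -
  have 1: "(\<Sum>l<M. cnj (Y i) * B i l * Y l) = (\<Sum>l\<in>P. cnj (Y i) * B i l * Y l)" for i
  proof (rule sum.mono_neutral_right)
    show "finite {..<M}" by simp
    show "P \<subseteq> {..<M}" by (rule P)
    show "\<forall>l\<in>{..<M} - P. cnj (Y i) * B i l * Y l = 0" using Y by simp
  qed
  have 2: "(\<Sum>i<M. \<Sum>l\<in>P. cnj (Y i) * B i l * Y l) = (\<Sum>i\<in>P. \<Sum>l\<in>P. cnj (Y i) * B i l * Y l)"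
  proof (rule sum.mono_neutral_right)
    show "finite {..<M}" by simp
    show "P \<subseteq> {..<M}" by (rule P)
    show "\<forall>i\<in>{..<M} - P. (\<Sum>l\<in>P. cnj (Y i) * B i l * Y l) = 0" using Y by simp
  qed
  show ?thesis unfolding 1 2 ..
qed

lemma sum3: "a \<noteq> b \<Longrightarrow> a \<noteq> c \<Longrightarrow> b \<noteq> c \<Longrightarrow>
  (\<Sum>i\<in>{a, b, c}. \<Sum>l\<in>{a, b, c}. f i l) = f a a + f a b + f a c + f b a + f b b + f b c + f c a + f c b + f c c"
  by (simp add: algebra_simps)

lemma qf_lemma:
  fixes B :: "nat \<Rightarrow> nat \<Rightarrow> complex" and \<alpha> :: complex
  assumes pos: "\<And>Y. Re (\<Sum>i<Suc N. \<Sum>l<Suc N. cnj (Y i) * B i l * Y l) \<ge> 0"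
    and const: "\<And>j l. j < N \<Longrightarrow> l < N \<Longrightarrow> B j l = \<alpha>"
    and herm: "\<And>j. j < Suc N \<Longrightarrow> B N j = cnj (B j N)"
    and N0: "0 < N" and B0: "B 0 N = \<alpha>" and ar: "Im \<alpha> = 0"
  shows "(\<forall>j<N. B j N = \<alpha>) \<and> Re (B N N) \<ge> Re \<alpha>"
proof
  show "\<forall>j<N. B j N = \<alpha>"
  proof (intro allI impI)
    fix j assume j: "j < N"
    show "B j N = \<alpha>"
    proof (cases "j = 0")
      case True then show ?thesis using B0 by simp
    next
      case False
      define \<delta> where "\<delta> = B j N - \<alpha>"
      show ?thesis
      proof (rule ccontr)
        assume "B j N \<noteq> \<alpha>"
        then have dn: "\<delta> \<noteq> 0" unfolding \<delta>_def by simp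
        define s where "s = (\<bar>Re (B N N)\<bar> + 1) / (2 * (cmod \<delta>)\<^sup>2)"
        define t where "t = - (of_real s * \<delta>)"
        define Y where "Y i = (if i = j then t else if i = 0 then - t else if i = N then 1 else 0)" for i
        have P: "{j, 0, N} \<subseteq> {..<Suc N}" using j by auto
        have Y0: "i \<notin> {j, 0, N} \<Longrightarrow> Y i = 0" for i unfolding Y_def by auto
        have d: "j \<noteq> 0" "j \<noteq> N" "0 \<noteq> N" using False j by auto
        have "(\<Sum>i<Suc N. \<Sum>l<Suc N. cnj (Y i) * B i l * Y l) = (\<Sum>i\<in>{j, 0, N}. \<Sum>l\<in>{j, 0, N}. cnj (Y i) * B i l * Y l)"
          by (rule quad_sparse[OF P Y0])
        also have "\<dots> = cnj t * \<delta> + cnj \<delta> * t + B N N"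
        proof -
          have y: "Y j = t" "Y 0 = - t" "Y N = 1" unfolding Y_def using d by auto
          have b: "B j j = \<alpha>" "B j 0 = \<alpha>" "B 0 j = \<alpha>" "B 0 0 = \<alpha>" "B N j = cnj (B j N)" "B N 0 = cnj \<alpha>"
            using const[of j j] const[of j 0] const[of 0 j] const[of 0 0] j N0 herm[of j] herm[of 0] B0 by auto
          show ?thesis unfolding sum3[OF d] y b B0 \<delta>_def by (simp add: algebra_simps)
        qed
        finally have e: "(\<Sum>i<Suc N. \<Sum>l<Suc N. cnj (Y i) * B i l * Y l) = cnj t * \<delta> + cnj \<delta> * t + B N N" .
        have "Re (cnj t * \<delta> + cnj \<delta> * t) = - 2 * s * ((Re \<delta>)\<^sup>2 + (Im \<delta>)\<^sup>2)"
          unfolding t_def by (simp add: algebra_simps power2_eq_square)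
        also have "\<dots> = - 2 * s * (cmod \<delta>)\<^sup>2" by (simp add: cmod_power2)
        also have "\<dots> = - (\<bar>Re (B N N)\<bar> + 1)" unfolding s_def using dn by simp
        finally have neg: "Re (cnj t * \<delta> + cnj \<delta> * t + B N N) < 0" by simp
        have "Re (\<Sum>i<Suc N. \<Sum>l<Suc N. cnj (Y i) * B i l * Y l) \<ge> 0" by (rule pos)
        then show False unfolding e using neg by linarith
      qed
    qed
  qed
next
  define Y where "Y i = (if i = N then 1 else if i = 0 then -1 else (0::complex))" for i
  have P: "{N, 0} \<subseteq> {..<Suc N}" by auto
  have Y0: "i \<notin> {N, 0} \<Longrightarrow> Y i = 0" for i unfolding Y_def by auto
  have "(\<Sum>i<Suc N. \<Sum>l<Suc N. cnj (Y i) * B i l * Y l) = (\<Sum>i\<in>{N, 0}. \<Sum>l\<in>{N, 0}. cnj (Y i) * B i l * Y l)"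
    by (rule quad_sparse[OF P Y0])
  also have "\<dots> = B N N - cnj \<alpha> - \<alpha> + \<alpha>"
    using N0 herm[of 0] B0 const[of 0 0] unfolding Y_def by simp
  finally have "Re (B N N - cnj \<alpha> - \<alpha> + \<alpha>) \<ge> 0" using pos[of Y] by metis
  then show "Re (B N N) \<ge> Re \<alpha>" by simp
qed

lemma sum2_delta0:
  fixes X :: "nat \<Rightarrow> nat \<Rightarrow> complex"
  assumes "0 < m"
  shows "(\<Sum>a<m. \<Sum>b<m. cnj (if a = 0 then p else 0) * X a b * (if b = 0 then q else 0)) = cnj p * X 0 0 * q"
proof -
  have e: "cnj (if a = 0 then p else 0) * X a b * (if b = 0 then q else 0) =
        (if b = 0 then (if a = 0 then cnj p * X 0 0 * q else 0) else 0)" for a b by auto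
  show ?thesis unfolding e using assms by (simp add: sum.delta)
qed

lemma pq_single:
  assumes "0 < m"
  shows "pq k m N lam A (\<lambda>j a. if a = 0 then Y j else 0) =
     (\<Sum>j<N. \<Sum>l<N. cnj (Y j) * ((1 - (\<Sum>c<m. A j 0 c * cnj (A l 0 c))) * k (lam j) (lam l)) * Y l)"
  unfolding pq_def using sum2_delta0[OF assms] by simp

lemma sum_Suc_Suc: "(\<Sum>c<Suc (Suc M). g c) = (\<Sum>c<M. g c) + g M + g (Suc M)"
  by simp

context rk2 begin

definition Fk :: "complex \<Rightarrow> complex \<Rightarrow> complex" where "Fk z w = 1 - a0 / k z w"

lemma Fk_herm: "z \<in> disc \<Longrightarrow> w \<in> disc \<Longrightarrow> Fk w z = cnj (Fk z w)"
  unfolding Fk_def using k_herm[of w z] a0_real by (metis complex_cnj_cnj complex_cnj_complex_of_real complex_cnj_diff complex_cnj_divide complex_cnj_one)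

lemma Fk_mult: "z \<in> disc \<Longrightarrow> w \<in> disc \<Longrightarrow> (1 - Fk z w) * k z w = a0"
  unfolding Fk_def using k_nz by simp

lemma pick_gram:
  fixes n :: nat and lam :: "nat \<Rightarrow> complex"
  assumes cp: "complete_pick H ip k"
  shows "(\<forall>i<n. lam i \<in> disc) \<Longrightarrow> \<exists>(M::nat) U. \<forall>i<n. \<forall>j<n. Fk (lam i) (lam j) = (\<Sum>c<M. U i c * cnj (U j c))"
proof (induction n arbitrary: lam)
  case 0 then show ?case by auto
next
  case (Suc n)
  from Suc.prems have ld: "i < Suc n \<Longrightarrow> lam i \<in> disc" for i by auto
  obtain M :: nat and U :: "nat \<Rightarrow> nat \<Rightarrow> complex" where IH: "\<And>i j. i < n \<Longrightarrow> j < n \<Longrightarrow> Fk (lam i) (lam j) = (\<Sum>c<M. U i c * cnj (U j c))"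
    using Suc.IH[of lam] ld by auto
  define m where "m = Suc M"
  define mu where "mu i = (if i = 0 then 0 else lam (i - 1))" for i
  define A :: "nat \<Rightarrow> nat \<Rightarrow> nat \<Rightarrow> complex" where "A j a c = (if j = 0 then 0 else if a = 0 \<and> c < M then U (j - 1) c else 0)" for j a c
  have mud: "i < Suc (Suc n) \<Longrightarrow> mu i \<in> disc" for i unfolding mu_def using ld by auto
  have E: "((if a = b then 1 else 0) - (\<Sum>c<m. A j a c * cnj (A l b c))) * k (mu j) (mu l)
           = (if a = b then (if a = 0 then a0 else k (mu j) (mu l)) else 0)"
    if jl: "j < Suc n" "l < Suc n" for j l a b
  proof (cases "a = 0 \<and> b = 0")
    case False
    then have "(\<Sum>c<m. A j a c * cnj (A l b c)) = 0" unfolding A_def by (intro sum.neutral ballI) auto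
    then show ?thesis using False by auto
  next
    case True
    show ?thesis
    proof (cases "j = 0 \<or> l = 0")
      case True2: True
      then have "(\<Sum>c<m. A j a c * cnj (A l b c)) = 0" unfolding A_def by (intro sum.neutral ballI) auto
      moreover have "k (mu j) (mu l) = a0"
      proof (cases "j = 0")
        case True
        then show ?thesis using k_0w[OF mud[of l]] jl by (simp add: mu_def)
      next
        case False
        then have "l = 0" using True2 by simp
        then show ?thesis using k_z0[OF mud[of j]] jl by (simp add: mu_def)
      qed
      ultimately show ?thesis using True by simp
    next
      case False2: False
      have "(\<Sum>c<m. A j a c * cnj (A l b c)) = (\<Sum>c<M. U (j - 1) c * cnj (U (l - 1) c))"
        unfolding m_def A_def using True False2 by simp
      also have "\<dots> = Fk (mu j) (mu l)"
      proof -
        have "j - 1 < n" "l - 1 < n" using False2 jl by auto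
        then show ?thesis unfolding mu_def using IH[of "j - 1" "l - 1"] False2 by simp
      qed
      finally show ?thesis using True Fk_mult[OF mud mud] jl by simp
    qed
  qed
  have pos: "Im (pq k m (Suc n) mu A v) = 0 \<and> Re (pq k m (Suc n) mu A v) \<ge> 0" for v
  proof -
    define T where "T a = (\<Sum>j<Suc n. \<Sum>l<Suc n. cnj (v j a) * (if a = 0 then a0 else k (mu j) (mu l)) * v l a)" for a
    have "pq k m (Suc n) mu A v = (\<Sum>j<Suc n. \<Sum>l<Suc n. \<Sum>a<m. \<Sum>b<m.
            cnj (v j a) * (if a = b then (if a = 0 then a0 else k (mu j) (mu l)) else 0) * v l b)"
      unfolding pq_def by (intro sum.cong refl) (simp add: E)
    also have "\<dots> = (\<Sum>j<Suc n. \<Sum>l<Suc n. \<Sum>a<m. cnj (v j a) * (if a = 0 then a0 else k (mu j) (mu l)) * v l a)"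
    proof -
      have "(\<Sum>b<m. cnj (v j a) * (if a = b then X else 0) * v l b) = (if a < m then cnj (v j a) * X * v l a else 0)"
        for j l a and X :: complex
      proof -
        have e: "(\<lambda>b. cnj (v j a) * (if a = b then X else 0) * v l b) = (\<lambda>b. if a = b then cnj (v j a) * X * v l a else 0)"
          by auto
        show ?thesis unfolding e by (simp add: sum.delta)
      qed
      then show ?thesis by (intro sum.cong refl) simp
    qed
    also have "\<dots> = (\<Sum>a<m. T a)" unfolding T_def by (rule sum_swap3)
    finally have pe: "pq k m (Suc n) mu A v = (\<Sum>a<m. T a)" .
    have Ta: "Im (T a) = 0 \<and> Re (T a) \<ge> 0" for a
    proof (cases "a = 0")
      case True
      have "T a = a0 * (\<Sum>j<Suc n. \<Sum>l<Suc n. cnj (v j a) * v l a)"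
        unfolding T_def using True by (simp add: sum_distrib_left mult_ac del: sum.lessThan_Suc)
      also have "(\<Sum>j<Suc n. \<Sum>l<Suc n. cnj (v j a) * v l a) = cnj (\<Sum>j<Suc n. v j a) * (\<Sum>l<Suc n. v l a)"
        by (simp add: sum_product cnj_sum del: sum.lessThan_Suc)
      also have "cnj (\<Sum>j<Suc n. v j a) * (\<Sum>l<Suc n. v l a) = of_real ((cmod (\<Sum>l<Suc n. v l a))\<^sup>2)"
        by (metis complex_norm_square mult.commute)
      finally show ?thesis using a0_pos by simp
    next
      case False
      have "T a = ip (\<lambda>z. \<Sum>l<Suc n. v l a * k z (mu l)) (\<lambda>z. \<Sum>l<Suc n. v l a * k z (mu l))"
        unfolding T_def using False ip_kk[of "Suc n" mu "\<lambda>l. v l a" "\<lambda>l. v l a"] mud by simp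
      then show ?thesis using ip_pos[OF kcomb_mem[of "Suc n" mu]] mud by simp
    qed
    show ?thesis unfolding pe Im_sum Re_sum using Ta by (simp add: sum_nonneg)
  qed
  obtain F where Fc: "contractive_multiplier H ip m F"
      and FA: "\<And>j a b. j < Suc n \<Longrightarrow> a < m \<Longrightarrow> b < m \<Longrightarrow> F (mu j) a b = A j a b"
  proof -
    have c1: "1 \<le> m" unfolding m_def by simp
    have c2: "\<And>j. j < Suc n \<Longrightarrow> mu j \<in> disc" using mud by simp
    have c3: "\<forall>v. Im (pq k m (Suc n) mu A v) = 0 \<and> 0 \<le> Re (pq k m (Suc n) mu A v)"
      using pos by blast
    have "\<exists>F. contractive_multiplier H ip m F \<and> (\<forall>j<Suc n. \<forall>a<m. \<forall>b<m. F (mu j) a b = A j a b)"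
      using cp[unfolded complete_pick_def Let_def, rule_format, OF c1 c2 pos[unfolded pq_def]] .
    then show ?thesis using that by blast
  qed
  define B where "B j l = (1 - (\<Sum>c<m. F (mu j) 0 c * cnj (F (mu l) 0 c))) * k (mu j) (mu l)" for j l
  have m0: "0 < m" unfolding m_def by simp
  have Bpos: "Re (\<Sum>i<Suc (Suc n). \<Sum>l<Suc (Suc n). cnj (Y i) * B i l * Y l) \<ge> 0" for Y
  proof -
    have "Im (pq k m (Suc (Suc n)) mu (\<lambda>j. F (mu j)) (\<lambda>j a. if a = 0 then Y j else 0)) = 0 \<and>
          Re (pq k m (Suc (Suc n)) mu (\<lambda>j. F (mu j)) (\<lambda>j a. if a = 0 then Y j else 0)) \<ge> 0"
      by (rule mult_nec[OF Fc mud])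
    then have "Re (pq k m (Suc (Suc n)) mu (\<lambda>j. F (mu j)) (\<lambda>j a. if a = 0 then Y j else 0)) \<ge> 0"
      by (rule conjunct2)
    then show ?thesis unfolding pq_single[OF m0] B_def .
  qed
  have FA0: "F (mu j) 0 c = A j 0 c" if "j < Suc n" "c < m" for j c using FA that m0 by simp
  have Bconst: "B j l = a0" if "j < Suc n" "l < Suc n" for j l
  proof -
    have "B j l = (1 - (\<Sum>c<m. A j 0 c * cnj (A l 0 c))) * k (mu j) (mu l)"
    proof -
      have "(\<Sum>c<m. F (mu j) 0 c * cnj (F (mu l) 0 c)) = (\<Sum>c<m. A j 0 c * cnj (A l 0 c))"
        by (rule sum.cong) (use FA0 that in auto)
      then show ?thesis unfolding B_def by simp
    qed
    then show ?thesis using E[OF that, of 0 0] by simp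
  qed
  have Bherm: "B (Suc n) j = cnj (B j (Suc n))" if "j < Suc (Suc n)" for j
  proof -
    have "cnj (\<Sum>c<m. F (mu j) 0 c * cnj (F (mu (Suc n)) 0 c)) = (\<Sum>c<m. F (mu (Suc n)) 0 c * cnj (F (mu j) 0 c))"
      by (simp add: cnj_sum mult.commute)
    then show ?thesis unfolding B_def using k_herm[OF mud[OF that] mud[of "Suc n"]] by simp
  qed
  have B0: "B 0 (Suc n) = a0"
  proof -
    have "(\<Sum>c<m. F (mu 0) 0 c * cnj (F (mu (Suc n)) 0 c)) = 0"
      using FA0[of 0] unfolding A_def by simp
    then show ?thesis unfolding B_def using k_0w[OF ld[of n]] unfolding mu_def by simp
  qed
  have qf: "(\<forall>j<Suc n. B j (Suc n) = a0) \<and> Re (B (Suc n) (Suc n)) \<ge> Re a0"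
    by (rule qf_lemma[OF Bpos Bconst Bherm _ B0]) (use a0_pos in auto)
  define W where "W c = F (lam n) 0 c" for c
  have muN: "mu (Suc n) = lam n" unfolding mu_def by simp
  have Si: "(\<Sum>c<M. U i c * cnj (W c)) = Fk (lam i) (lam n)" if i: "i < n" for i
  proof -
    have "B (Suc i) (Suc n) = a0" using qf i by auto
    moreover have "(\<Sum>c<m. F (mu (Suc i)) 0 c * cnj (F (mu (Suc n)) 0 c)) = (\<Sum>c<M. U i c * cnj (W c))"
      using FA0[of "Suc i"] i unfolding A_def W_def muN m_def by simp
    ultimately have "(1 - (\<Sum>c<M. U i c * cnj (W c))) * k (lam i) (lam n) = a0"
      unfolding B_def muN by (simp add: mu_def)
    then show ?thesis unfolding Fk_def using k_nz[OF ld ld, of i n] i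
      by (simp add: field_simps)
  qed
  define T where "T = (\<Sum>c<m. W c * cnj (W c))"
  have Treal: "T = of_real (Re T)" unfolding T_def
    by (simp add: complex_eq_iff Im_sum Re_sum)
  define \<kappa> where "\<kappa> = k (lam n) (lam n)"
  have kap: "Im \<kappa> = 0 \<and> Re \<kappa> > 0" unfolding \<kappa>_def using k_diag_pos ld by simp
  have "Re ((1 - T) * \<kappa>) \<ge> Re a0" using qf unfolding B_def T_def W_def \<kappa>_def muN by simp
  then have T1: "(1 - Re T) * Re \<kappa> \<ge> Re a0" using kap Treal by (simp add: complex_eq_iff)
  have Fkn: "Fk (lam n) (lam n) = of_real (1 - Re a0 / Re \<kappa>)"
    unfolding Fk_def \<kappa>_def[symmetric] using kap a0_pos
    by (simp add: complex_eq_iff Re_divide Im_divide power2_eq_square)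
  define s where "s = (1 - Re a0 / Re \<kappa>) - Re T"
  have s0: "s \<ge> 0" unfolding s_def using T1 kap by (simp add: field_simps)
  define U' where "U' i c = (if i < n then (if c < M then U i c else 0)
      else (if c < Suc M then W c else if c = Suc M then of_real (sqrt s) else 0))" for i c
  have sU: "(\<Sum>c<M. U' i c * cnj (U' j c)) = (\<Sum>c<M. (if i < n then U i c else W c) * cnj (if j < n then U j c else W c))" for i j
    by (rule sum.cong) (auto simp: U'_def)
  have Uexp: "(\<Sum>c<Suc (Suc M). U' i c * cnj (U' j c)) = (\<Sum>c<M. (if i < n then U i c else W c) * cnj (if j < n then U j c else W c))
      + U' i M * cnj (U' j M) + U' i (Suc M) * cnj (U' j (Suc M))" for i j
    unfolding sum_Suc_Suc sU ..
  show ?case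
  proof (intro exI[of _ "Suc (Suc M)"] exI[of _ U'] allI impI)
    fix i j assume i: "i < Suc n" and j: "j < Suc n"
    show "Fk (lam i) (lam j) = (\<Sum>c<Suc (Suc M). U' i c * cnj (U' j c))"
    proof (cases "i < n")
      case iT: True
      show ?thesis
      proof (cases "j < n")
        case True
        have "(\<Sum>c<Suc (Suc M). U' i c * cnj (U' j c)) = (\<Sum>c<M. U i c * cnj (U j c))"
          unfolding Uexp using iT True by (simp add: U'_def)
        then show ?thesis using IH iT True by simp
      next
        case False
        then have jn: "j = n" using j by simp
        have "(\<Sum>c<Suc (Suc M). U' i c * cnj (U' j c)) = (\<Sum>c<M. U i c * cnj (W c))"
          unfolding Uexp using iT jn by (simp add: U'_def)
        then show ?thesis using Si[OF iT] jn by simp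
      qed
    next
      case iF: False
      then have iN: "i = n" using i by simp
      show ?thesis
      proof (cases "j < n")
        case True
        have "(\<Sum>c<Suc (Suc M). U' i c * cnj (U' j c)) = (\<Sum>c<M. W c * cnj (U j c))"
          unfolding Uexp using iN True by (simp add: U'_def)
        also have "\<dots> = cnj (\<Sum>c<M. U j c * cnj (W c))" by (simp add: cnj_sum mult.commute)
        also have "\<dots> = cnj (Fk (lam j) (lam n))" using Si[OF True] by simp
        also have "\<dots> = Fk (lam n) (lam j)" using Fk_herm[OF ld ld, of j n] True by simp
        finally show ?thesis using iN by simp
      next
        case False
        then have jN: "j = n" using j by simp
        have "(\<Sum>c<Suc (Suc M). U' i c * cnj (U' j c)) = (\<Sum>c<M. W c * cnj (W c)) + W M * cnj (W M) + of_real (sqrt s) * of_real (sqrt s)"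
          unfolding Uexp using iN jN by (simp add: U'_def)
        also have "(\<Sum>c<M. W c * cnj (W c)) + W M * cnj (W M) = T" unfolding T_def m_def by simp
        also have "of_real (sqrt s) * of_real (sqrt s) = (of_real s :: complex)"
          using s0 by (simp flip: of_real_mult)
        finally have X: "(\<Sum>c<Suc (Suc M). U' i c * cnj (U' j c)) = T + of_real s" .
        have "T + of_real s = of_real (Re T + s)" by (subst Treal) simp
        with X have "(\<Sum>c<Suc (Suc M). U' i c * cnj (U' j c)) = of_real (Re T + s)" by simp
        then show ?thesis using Fkn iN jN unfolding s_def by simp
      qed
    qed
  qed
qed

end

lemma root_sum:
  fixes N n m :: nat
  assumes nN: "n < N"
  defines "\<omega> \<equiv> exp (2 * of_real pi * \<i> / of_nat N)"
  shows "cnj (\<Sum>l<N. (\<omega> ^ n * cnj \<omega> ^ m) ^ l) * (\<Sum>l<N. (\<omega> ^ n * cnj \<omega> ^ m) ^ l)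
          = (if m mod N = n then of_nat N ^ 2 else 0)"
proof -
  have N1: "1 \<le> N" using nN by simp
  have pw: "\<omega> ^ j = exp (2 * of_real pi * \<i> * of_nat j / of_nat N)" for j
  proof -
    have "\<omega> ^ j = exp (of_nat j * (2 * of_real pi * \<i> / of_nat N))"
      unfolding \<omega>_def exp_of_nat_mult ..
    also have "of_nat j * (2 * of_real pi * \<i> / of_nat N) = 2 * of_real pi * \<i> * of_nat j / (of_nat N :: complex)"
      by (simp add: field_simps)
    finally show ?thesis .
  qed
  have nrm: "norm \<omega> = 1" unfolding \<omega>_def by simp
  have n1: "cnj \<omega> * \<omega> = 1"
    using complex_norm_square[of \<omega>] nrm by (simp add: mult.commute)
  have \<omega>N: "\<omega> ^ N = 1" using pw[of N] N1 by simp
  define r where "r = \<omega> ^ n * cnj \<omega> ^ m"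
  have rN: "r ^ N = 1"
  proof -
    have "r ^ N = (\<omega> ^ N) ^ n * cnj (\<omega> ^ N) ^ m"
      unfolding r_def by (simp add: power_mult_distrib flip: power_mult) (simp add: mult.commute)
    then show ?thesis using \<omega>N by simp
  qed
  have cm: "cnj \<omega> ^ m * \<omega> ^ m = 1" using n1 by (metis power_mult_distrib power_one)
  show ?thesis
  proof (cases "m mod N = n")
    case True
    have "\<omega> ^ m = \<omega> ^ n" unfolding pw using complex_root_unity_eq[OF N1, of m n] True nN by simp
    then have "r = 1" unfolding r_def using cm by (simp add: mult.commute)
    then show ?thesis unfolding r_def[symmetric] using True by (simp add: power2_eq_square)
  next
    case False
    have ne: "\<omega> ^ m \<noteq> \<omega> ^ n" unfolding pw using complex_root_unity_eq[OF N1, of m n] False nN by simp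
    have "r \<noteq> 1"
    proof
      assume "r = 1"
      then have "\<omega> ^ n * (cnj \<omega> ^ m * \<omega> ^ m) = \<omega> ^ m" unfolding r_def by (metis mult.assoc mult_1)
      then show False using cm ne by simp
    qed
    then have "(\<Sum>l<N. r ^ l) = 0" using rN by (simp add: geometric_sum)
    then show ?thesis unfolding r_def[symmetric] using False by simp
  qed
qed

context rk2 begin

lemma Fk_psd:
  fixes N :: nat
  assumes cp: "complete_pick H ip k" and lam: "\<forall>i<N. lam i \<in> disc"
  shows "Im (\<Sum>i<N. \<Sum>j<N. cnj (x i) * Fk (lam i) (lam j) * x j) = 0 \<and>
         Re (\<Sum>i<N. \<Sum>j<N. cnj (x i) * Fk (lam i) (lam j) * x j) \<ge> 0"
proof -
  obtain M :: nat and U where U: "\<And>i j. i < N \<Longrightarrow> j < N \<Longrightarrow> Fk (lam i) (lam j) = (\<Sum>c<M. U i c * cnj (U j c))"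
    using pick_gram[OF cp lam] by blast
  define P where "P c = (\<Sum>j<N. x j * cnj (U j c))" for c
  have "(\<Sum>i<N. \<Sum>j<N. cnj (x i) * Fk (lam i) (lam j) * x j)
      = (\<Sum>i<N. \<Sum>j<N. \<Sum>c<M. cnj (x i) * U i c * (x j * cnj (U j c)))"
    using U by (simp add: sum_distrib_left sum_distrib_right mult_ac)
  also have "\<dots> = (\<Sum>c<M. \<Sum>i<N. \<Sum>j<N. cnj (x i) * U i c * (x j * cnj (U j c)))"
    by (rule sum_swap3)
  also have "\<dots> = (\<Sum>c<M. (\<Sum>i<N. cnj (x i) * U i c) * (\<Sum>j<N. x j * cnj (U j c)))"
    by (simp only: sum_product mult.assoc)
  also have "\<dots> = (\<Sum>c<M. cnj (P c) * P c)"
  proof -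
    have "(\<Sum>i<N. cnj (x i) * U i c) = cnj (P c)" for c by (simp add: P_def cnj_sum)
    then show ?thesis unfolding P_def by simp
  qed
  also have "\<dots> = (\<Sum>c<M. of_real ((cmod (P c))\<^sup>2))"
    by (rule sum.cong[OF refl]) (metis complex_norm_square mult.commute)
  finally have e: "(\<Sum>i<N. \<Sum>j<N. cnj (x i) * Fk (lam i) (lam j) * x j) = (\<Sum>c<M. of_real ((cmod (P c))\<^sup>2))" .
  show ?thesis unfolding e by (simp add: Im_sum Re_sum sum_nonneg)
qed


lemma dd_summable: "summable (\<lambda>m. cmod (dd m) * (1/4) ^ m)"
proof -
  have "(\<lambda>m. dd m * (1/2::complex) ^ m) sums phi (1/2)" by (rule phi_sums) simp
  then have "Bseq (\<lambda>m. dd m * (1/2::complex) ^ m)" by (rule summable_imp_Bseq[OF sums_summable])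
  then obtain B where B: "\<And>m. norm (dd m * (1/2::complex) ^ m) \<le> B" by (auto simp: Bseq_def)
  have "norm (dd m) * (1/2) ^ m \<le> B" for m using B[of m] by (simp add: norm_mult norm_power)
  then show ?thesis using Abel_lemma[of "1/4" "1/2" dd B] by simp
qed

lemma dd_key:
  assumes cp: "complete_pick H ip k" and nN: "n < N"
  defines "\<rho> \<equiv> (1/4::real)"
  defines "g \<equiv> (\<lambda>m. cmod (dd m) * \<rho> ^ m)"
  shows "\<bar>Im (dd n)\<bar> * \<rho> ^ n \<le> suminf g - (\<Sum>m<N. g m) \<and> - (suminf g - (\<Sum>m<N. g m)) \<le> Re (dd n) * \<rho> ^ n"
proof -
  have sg: "summable g" unfolding g_def \<rho>_def by (rule dd_summable)
  define Tt where "Tt = suminf g - (\<Sum>m<N. g m)"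
  define \<omega> where "\<omega> = exp (2 * of_real pi * \<i> / of_nat N)"
  have nrm: "norm \<omega> = 1" unfolding \<omega>_def by simp
  define lam where "lam j = \<omega> ^ j / 2" for j
  define x where "x j = (\<omega> ^ n) ^ j" for j
  have lamd: "lam j \<in> disc" for j unfolding lam_def using nrm by (simp add: norm_divide norm_power)
  define Q where "Q = (\<Sum>i<N. \<Sum>j<N. cnj (x i) * Fk (lam i) (lam j) * x j)"
  have Qp: "Im Q = 0 \<and> Re Q \<ge> 0" unfolding Q_def by (rule Fk_psd[OF cp]) (use lamd in auto)
  have ser: "(\<lambda>m. dd m * (lam i * cnj (lam j)) ^ m) sums Fk (lam i) (lam j)" for i j
  proof -
    have t: "lam i * cnj (lam j) \<in> disc" using nrm unfolding lam_def by (simp add: norm_mult norm_divide norm_power)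
    show ?thesis using phi_sums[OF t] phi_k[OF lamd lamd] unfolding Fk_def by simp
  qed
  have s1: "(\<lambda>m. \<Sum>i<N. \<Sum>j<N. cnj (x i) * (dd m * (lam i * cnj (lam j)) ^ m) * x j) sums Q"
    unfolding Q_def
    by (intro sums_sum sums_mult sums_mult2 ser)
  define c where "c m = dd m * of_real (\<rho> ^ m) * (if m mod N = n then of_nat N ^ 2 else 0)" for m
  have ceq: "(\<Sum>i<N. \<Sum>j<N. cnj (x i) * (dd m * (lam i * cnj (lam j)) ^ m) * x j) = c m" for m
  proof -
    define r where "r = \<omega> ^ n * cnj \<omega> ^ m"
    have pt: "cnj (x i) * (dd m * (lam i * cnj (lam j)) ^ m) * x j = dd m * of_real (\<rho> ^ m) * (cnj (r ^ i) * r ^ j)" for i j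
      unfolding x_def lam_def r_def \<rho>_def
      by (simp add: power_mult_distrib power_divide mult_ac flip: power_mult)
    have "(\<Sum>i<N. \<Sum>j<N. cnj (x i) * (dd m * (lam i * cnj (lam j)) ^ m) * x j)
        = dd m * of_real (\<rho> ^ m) * ((\<Sum>i<N. cnj (r ^ i)) * (\<Sum>j<N. r ^ j))"
      unfolding pt sum_product by (simp only: sum_distrib_left)
    also have "(\<Sum>i<N. cnj (r ^ i)) * (\<Sum>j<N. r ^ j) = (if m mod N = n then of_nat N ^ 2 else 0)"
      using root_sum[OF nN, of m] unfolding r_def \<omega>_def by (simp add: cnj_sum)
    finally show ?thesis unfolding c_def .
  qed
  have cs: "c sums Q" using s1 unfolding ceq .
  have cn: "c n = dd n * of_real (\<rho> ^ n) * of_nat N ^ 2" unfolding c_def using nN by simp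
  define e where "e m = c m - (if m = n then c m else 0)" for m
  have es: "e sums (Q - c n)" unfolding e_def by (intro sums_diff cs sums_single)
  define bnd where "bnd m = of_nat N ^ 2 * (if N \<le> m then g m else 0)" for m
  have bs: "bnd sums (of_nat N ^ 2 * Tt)"
  proof -
    have "(\<lambda>m. g m - (if m \<in> {..<N} then g m else 0)) sums (suminf g - (\<Sum>m\<in>{..<N}. g m))"
      by (intro sums_diff summable_sums sg sums_If_finite_set) simp
    moreover have "(\<lambda>m. g m - (if m \<in> {..<N} then g m else 0)) = (\<lambda>m. if N \<le> m then g m else 0)"
      by auto
    ultimately have "(\<lambda>m. if N \<le> m then g m else 0) sums Tt" unfolding Tt_def by simp
    then show ?thesis unfolding bnd_def by (rule sums_mult)
  qed
  have eb: "norm (e m) \<le> bnd m" for m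
  proof (cases "m mod N = n \<and> m \<noteq> n")
    case True
    then have "N \<le> m" using nN by (metis mod_less not_le)
    then show ?thesis using True unfolding e_def c_def bnd_def g_def \<rho>_def
      by (simp add: norm_mult norm_power)
  next
    case False
    then have "e m = 0" unfolding e_def c_def by auto
    then show ?thesis unfolding bnd_def g_def \<rho>_def by simp
  qed
  have sne: "summable (\<lambda>m. norm (e m))"
    by (rule summable_comparison_test[OF _ sums_summable[OF bs]]) (use eb in auto)
  have E: "norm (Q - c n) \<le> of_nat N ^ 2 * Tt"
  proof -
    have "norm (Q - c n) = norm (suminf e)" using sums_unique[OF es] by simp
    also have "\<dots> \<le> (\<Sum>m. norm (e m))" by (rule summable_norm[OF sne])
    also have "\<dots> \<le> suminf bnd" by (rule suminf_le[OF eb sne sums_summable[OF bs]])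
    also have "\<dots> = of_nat N ^ 2 * Tt" using sums_unique[OF bs] by simp
    finally show ?thesis .
  qed
  have N2: "(0::real) < of_nat N ^ 2" using nN by simp
  have rn: "Im (c n) = Im (dd n) * \<rho> ^ n * of_nat N ^ 2" "Re (c n) = Re (dd n) * \<rho> ^ n * of_nat N ^ 2"
    unfolding cn by simp_all
  have "\<bar>Im (Q - c n)\<bar> \<le> of_nat N ^ 2 * Tt" using E abs_Im_le_cmod order_trans by blast
  then have i1: "\<bar>Im (dd n)\<bar> * \<rho> ^ n * of_nat N ^ 2 \<le> of_nat N ^ 2 * Tt"
    using Qp rn unfolding \<rho>_def by (simp add: abs_mult)
  have reb: "\<bar>Re (Q - c n)\<bar> \<le> of_nat N ^ 2 * Tt" using E abs_Re_le_cmod order_trans by blast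
  have r1: "- (of_nat N ^ 2 * Tt) \<le> Re (dd n) * \<rho> ^ n * of_nat N ^ 2"
  proof -
    have "Re (Q - c n) = Re Q - Re (c n)" by simp
    then show ?thesis using reb Qp rn by linarith
  qed
  show ?thesis unfolding Tt_def[symmetric]
  proof
    show "\<bar>Im (dd n)\<bar> * \<rho> ^ n \<le> Tt" using i1 N2 by (simp add: mult.commute)
    have "of_nat N ^ 2 * (- Tt) \<le> of_nat N ^ 2 * (Re (dd n) * \<rho> ^ n)" using r1 by (simp add: algebra_simps)
    then show "- Tt \<le> Re (dd n) * \<rho> ^ n" using N2 mult_le_cancel_left_pos by blast
  qed
qed

lemma dd_nonneg:
  assumes cp: "complete_pick H ip k"
  shows "Im (dd n) = 0 \<and> Re (dd n) \<ge> 0"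
proof -
  define g where "g = (\<lambda>m. cmod (dd m) * (1/4::real) ^ m)"
  have sg: "summable g" unfolding g_def by (rule dd_summable)
  define Tt where "Tt N = suminf g - (\<Sum>m<N. g m)" for N
  have Tt0: "Tt \<longlonglongrightarrow> 0"
  proof -
    have "(\<lambda>N. suminf g - (\<Sum>m<N. g m)) \<longlonglongrightarrow> suminf g - suminf g"
      by (intro tendsto_diff tendsto_const summable_LIMSEQ sg)
    then show ?thesis unfolding Tt_def by simp
  qed
  have key: "\<bar>Im (dd n)\<bar> * (1/4) ^ n \<le> Tt N \<and> - Tt N \<le> Re (dd n) * (1/4) ^ n" if "N \<ge> Suc n" for N
    using dd_key[OF cp, of n N] that unfolding Tt_def g_def by simp
  have "\<bar>Im (dd n)\<bar> * (1/4) ^ n \<le> 0"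
    by (rule LIMSEQ_le_const[OF Tt0]) (use key in blast)
  moreover have "(0::real) < (1/4) ^ n" by simp
  ultimately have i: "Im (dd n) = 0" by (smt (verit) mult_pos_pos abs_not_less_zero zero_less_abs_iff)
  have "(\<lambda>N. - Tt N) \<longlonglongrightarrow> - 0" by (intro tendsto_minus Tt0)
  then have "- 0 \<le> Re (dd n) * (1/4) ^ n"
    by (rule LIMSEQ_le_const2) (use key in blast)
  moreover have "(0::real) < (1/4) ^ n" by simp
  ultimately have "Re (dd n) \<ge> 0" by (simp add: zero_le_mult_iff)
  then show ?thesis using i by simp
qed

end

lemma lin_dep:
  fixes V :: "nat \<Rightarrow> nat \<Rightarrow> complex" and M :: nat and J :: "nat set"
  assumes "finite J" "M < card J"
  shows "\<exists>\<alpha>. (\<exists>j\<in>J. \<alpha> j \<noteq> 0) \<and> (\<forall>i<M. (\<Sum>j\<in>J. \<alpha> j * V j i) = 0)"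
  using assms
proof (induction M arbitrary: J V)
  case 0
  then have "J \<noteq> {}" by auto
  then show ?case by (intro exI[of _ "\<lambda>_. 1"]) auto
next
  case (Suc M)
  show ?case
  proof (cases "\<forall>j\<in>J. V j M = 0")
    case True
    obtain \<alpha> where a: "\<exists>j\<in>J. \<alpha> j \<noteq> 0" "\<forall>i<M. (\<Sum>j\<in>J. \<alpha> j * V j i) = 0"
      using Suc.IH[of J V] Suc.prems by auto
    have "\<forall>i<Suc M. (\<Sum>j\<in>J. \<alpha> j * V j i) = 0"
    proof (intro allI impI)
      fix i assume "i < Suc M"
      then consider "i < M" | "i = M" by linarith
      then show "(\<Sum>j\<in>J. \<alpha> j * V j i) = 0"
        by cases (use a True in auto)
    qed
    then show ?thesis using a by blast
  next
    case False
    then obtain p where p: "p \<in> J" "V p M \<noteq> 0" by auto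
    define J' where "J' = J - {p}"
    have fJ': "finite J'" unfolding J'_def using Suc.prems by simp
    have cJ': "M < card J'" unfolding J'_def using Suc.prems p by simp
    define W where "W j i = V j i - (V j M / V p M) * V p i" for j i
    obtain \<beta> where b: "\<exists>j\<in>J'. \<beta> j \<noteq> 0" "\<forall>i<M. (\<Sum>j\<in>J'. \<beta> j * W j i) = 0"
      using Suc.IH[OF fJ' cJ', of W] by auto
    have bW: "(\<Sum>j\<in>J'. \<beta> j * W j i) = 0" if "i < Suc M" for i
    proof (cases "i < M")
      case True then show ?thesis using b by auto
    next
      case False
      then have "i = M" using that by simp
      then show ?thesis unfolding W_def using p by simp
    qed
    define \<alpha> where "\<alpha> j = (if j = p then - (\<Sum>l\<in>J'. \<beta> l * V l M) / V p M else \<beta> j)" for j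
    have "(\<Sum>j\<in>J. \<alpha> j * V j i) = 0" if i: "i < Suc M" for i
    proof -
      have "(\<Sum>j\<in>J. \<alpha> j * V j i) = \<alpha> p * V p i + (\<Sum>j\<in>J'. \<alpha> j * V j i)"
        unfolding J'_def using Suc.prems p by (simp add: sum.remove)
      also have "(\<Sum>j\<in>J'. \<alpha> j * V j i) = (\<Sum>j\<in>J'. \<beta> j * V j i)"
        unfolding \<alpha>_def J'_def by (rule sum.cong) auto
      also have "\<dots> = (\<Sum>j\<in>J'. \<beta> j * W j i) + (\<Sum>l\<in>J'. \<beta> l * V l M) / V p M * V p i"
        unfolding W_def by (simp add: algebra_simps sum_distrib_right sum_subtractf sum_divide_distrib)
          (simp add: sum_distrib_left mult_ac)
      finally show ?thesis using bW[OF i] unfolding \<alpha>_def by simp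
    qed
    moreover have "\<exists>j\<in>J. \<alpha> j \<noteq> 0" using b unfolding \<alpha>_def J'_def by auto
    ultimately show ?thesis by blast
  qed
qed

lemma powser_zero:
  fixes a :: "nat \<Rightarrow> complex"
  assumes "\<And>t. cmod t < 1 \<Longrightarrow> (\<lambda>n. a n * t ^ n) sums 0"
  shows "a n = 0"
proof -
  define F where "F = Abs_fps a"
  have "summable (\<lambda>n. fps_nth F n * (1/2::complex) ^ n)"
    unfolding F_def using assms[of "1/2"] by (simp add: sums_summable)
  then have "fps_conv_radius F \<ge> norm (1/2::complex)"
    unfolding fps_conv_radius_def by (rule conv_radius_geI)
  then have r: "fps_conv_radius F > 0"
    by (metis ereal_less(2) norm_divide norm_one norm_numeral order_less_le_trans zero_less_divide_1_iff zero_less_numeral)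
  have "eventually (\<lambda>z. z \<in> ball (0::complex) 1) (nhds 0)" by (rule eventually_nhds_ball) simp
  then have "eventually (\<lambda>z. eval_fps F z = 0) (nhds 0)"
  proof (rule eventually_mono)
    fix z :: complex assume "z \<in> ball 0 1"
    then have "(\<lambda>n. a n * z ^ n) sums 0" using assms by simp
    then show "eval_fps F z = 0" unfolding eval_fps_def F_def by (simp add: sums_iff)
  qed
  then have "(\<lambda>_. 0) has_fps_expansion F" unfolding has_fps_expansion_def using r by simp
  then have "F = 0" using has_fps_expansion_0 fps_expansion_unique_complex by blast
  then show ?thesis unfolding F_def by (metis fps_nth_Abs_fps fps_zero_nth)
qed

lemma half_pow_inj: "(1/2::complex) ^ m = (1/2) ^ n \<Longrightarrow> m = n"
proof -
  assume "(1/2::complex) ^ m = (1/2) ^ n"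
  then have "norm ((1/2::complex) ^ m) = norm ((1/2::complex) ^ n)" by simp
  then have "(1/2::real) ^ m = (1/2) ^ n" by (simp add: norm_power norm_divide)
  then have "(2::real) ^ m = 2 ^ n" by (simp add: power_one_over)
  then show "m = n" by (simp add: power_inject_exp)
qed

lemma vand:
  fixes \<beta> :: "nat \<Rightarrow> complex" and T :: "nat set" and D :: nat
  assumes cT: "card T = Suc D" and fT: "finite T" and T0: "0 \<notin> T"
    and eq: "\<And>n. n \<in> T \<Longrightarrow> (\<Sum>j\<in>{1..Suc D}. \<beta> j * ((1/2) ^ n) ^ j) = 0"
  shows "\<forall>j\<in>{1..Suc D}. \<beta> j = 0"
proof -
  define q where "q = (\<Sum>j\<in>{1..Suc D}. monom (\<beta> j) j)"
  have pq: "poly q x = (\<Sum>j\<in>{1..Suc D}. \<beta> j * x ^ j)" for x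
    unfolding q_def by (simp add: poly_sum poly_monom)
  have cq: "coeff q i = (if i \<in> {1..Suc D} then \<beta> i else 0)" for i
    unfolding q_def by (simp add: coeff_sum coeff_monom)
  have dq: "degree q \<le> Suc D"
    unfolding q_def by (rule degree_sum_le) (auto intro: order_trans[OF degree_monom_le])
  have "q = 0"
  proof (rule ccontr)
    assume qn: "q \<noteq> 0"
    define R where "R = insert 0 ((\<lambda>n. (1/2::complex) ^ n) ` T)"
    have inj: "inj_on (\<lambda>n. (1/2::complex) ^ n) T" by (rule inj_onI) (rule half_pow_inj)
    have "0 \<notin> (\<lambda>n. (1/2::complex) ^ n) ` T" by auto
    then have cR: "card R = Suc (Suc D)" unfolding R_def using fT inj cT by (simp add: card_image)
    have "R \<subseteq> {x. poly q x = 0}" unfolding R_def using eq by (auto simp: pq)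
    then have "card R \<le> card {x. poly q x = 0}" by (rule card_mono[OF poly_roots_finite[OF qn]])
    also have "\<dots> \<le> degree q" by (rule card_poly_roots_bound[OF qn])
    finally show False using cR dq by simp
  qed
  then show ?thesis using cq by (metis coeff_0)
qed

context rk2 begin

lemma inv_k: "z \<in> disc \<Longrightarrow> w \<in> disc \<Longrightarrow> 1 / k z w = (1 - phi (z * cnj w)) / a0"
  using phi_k[of z w] k_nz[of z w] a0_nz by (simp add: field_simps)

lemma lower:
  assumes emb: "embeds_in k (enat D)" and fT: "finite T" and TS: "T \<subseteq> {n. dd n \<noteq> 0}"
  shows "card T \<le> D"
proof (rule ccontr)
  assume "\<not> card T \<le> D"
  then obtain T' where T': "T' \<subseteq> T" "card T' = Suc D" "finite T'"
    by (metis not_le Suc_leI obtain_subset_with_card_n)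
  have T'0: "0 \<notin> T'" using T' TS dd0 by auto
  have T'd: "n \<in> T' \<Longrightarrow> dd n \<noteq> 0" for n using T' TS by auto
  obtain b :: "complex \<Rightarrow> nat \<Rightarrow> complex" and \<delta> :: "complex \<Rightarrow> complex" where
    X1: "\<forall>z\<in>disc. (\<forall>i. enat D \<le> enat i \<longrightarrow> b z i = 0) \<and>
                   summable (\<lambda>i. (cmod (b z i))\<^sup>2) \<and> (\<Sum>i. (cmod (b z i))\<^sup>2) < 1"
    and X2: "\<forall>z\<in>disc. \<delta> z \<noteq> 0"
    and X3: "\<forall>z\<in>disc. \<forall>w\<in>disc. k z w = \<delta> z * cnj (\<delta> w) / (1 - (\<Sum>i. b z i * cnj (b w i)))"
    using emb unfolding embeds_in_def by blast
  have bz: "\<And>z i. z \<in> disc \<Longrightarrow> D \<le> i \<Longrightarrow> b z i = 0" using X1 by simp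
  have \<delta>nz: "\<And>z. z \<in> disc \<Longrightarrow> \<delta> z \<noteq> 0" using X2 by blast
  have keq: "\<And>z w. z \<in> disc \<Longrightarrow> w \<in> disc \<Longrightarrow> k z w = \<delta> z * cnj (\<delta> w) / (1 - (\<Sum>i. b z i * cnj (b w i)))"
    using X3 by blast
  have Bs: "(\<Sum>i. b z i * cnj (b w i)) = (\<Sum>i<D. b z i * cnj (b w i))" if "z \<in> disc" for z w
    by (rule suminf_finite) (use bz[OF that] in auto)
  have star: "\<delta> z * cnj (\<delta> w) + a0 * (\<Sum>i<D. b z i * cnj (b w i)) = a0 + \<delta> z * cnj (\<delta> w) * phi (z * cnj w)"
    if zw: "z \<in> disc" "w \<in> disc" for z w
  proof -
    define B where "B = (\<Sum>i<D. b z i * cnj (b w i))"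
    have kk: "k z w = \<delta> z * cnj (\<delta> w) / (1 - B)" using keq[OF zw] Bs[OF zw(1)] unfolding B_def by simp
    have B1: "1 - B \<noteq> 0" using kk k_nz[OF zw] by auto
    have "phi (z * cnj w) = 1 - a0 / k z w" by (rule phi_k[OF zw])
    then show ?thesis unfolding B_def[symmetric] using kk B1 \<delta>nz[OF zw(1)] \<delta>nz[OF zw(2)]
      by (simp add: field_simps)
  qed
  define w where "w j = (if j = 0 then 0 else (1/2::complex) ^ j)" for j
  have wd: "w j \<in> disc" for j unfolding w_def by (simp add: norm_power power_less_one_iff)
  have wr: "cnj (w j) = w j" for j unfolding w_def by simp
  define J where "J = {0..Suc D}"
  define V where "V j i = (if i = 0 then cnj (\<delta> (w j)) else cnj (b (w j) (i - 1)))" for j i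
  obtain \<alpha> where anz: "\<exists>j\<in>J. \<alpha> j \<noteq> 0" and aV: "\<forall>i<Suc D. (\<Sum>j\<in>J. \<alpha> j * V j i) = 0"
    using lin_dep[of J "Suc D" V] unfolding J_def by auto
  have A0: "(\<Sum>j\<in>J. \<alpha> j * cnj (\<delta> (w j))) = 0" using aV[rule_format, of 0] unfolding V_def by simp
  have Ai: "(\<Sum>j\<in>J. \<alpha> j * cnj (b (w j) i)) = 0" if "i < D" for i
    using aV[rule_format, of "Suc i"] that unfolding V_def by simp
  define \<beta> where "\<beta> j = \<alpha> j * cnj (\<delta> (w j))" for j
  have main: "a0 * (\<Sum>j\<in>J. \<alpha> j) + \<delta> z * (\<Sum>j\<in>J. \<beta> j * phi (z * w j)) = 0" if z: "z \<in> disc" for z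
  proof -
    have "(\<Sum>j\<in>J. \<alpha> j * (\<delta> z * cnj (\<delta> (w j)) + a0 * (\<Sum>i<D. b z i * cnj (b (w j) i))))
        = \<delta> z * (\<Sum>j\<in>J. \<alpha> j * cnj (\<delta> (w j))) + a0 * (\<Sum>i<D. b z i * (\<Sum>j\<in>J. \<alpha> j * cnj (b (w j) i)))"
      by (simp add: algebra_simps sum.distrib sum_distrib_left sum_distrib_right)
        (subst sum.swap, simp add: mult_ac)
    also have "\<dots> = 0" using A0 Ai by simp
    finally have "(\<Sum>j\<in>J. \<alpha> j * (a0 + \<delta> z * cnj (\<delta> (w j)) * phi (z * w j))) = 0"
      using star[OF z wd] wr by simp
    then show ?thesis unfolding \<beta>_def by (simp add: algebra_simps sum.distrib sum_distrib_left)
  qed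
  have sa: "(\<Sum>j\<in>J. \<alpha> j) = 0" using main[of 0] phi0 a0_nz by simp
  have zero: "(\<Sum>j\<in>J. \<beta> j * phi (z * w j)) = 0" if "z \<in> disc" for z
    using main[OF that] sa \<delta>nz[OF that] by simp
  have coef: "dd n * (\<Sum>j\<in>J. \<beta> j * w j ^ n) = 0" for n
  proof (rule powser_zero[where a = "\<lambda>n. dd n * (\<Sum>j\<in>J. \<beta> j * w j ^ n)"])
    fix t :: complex assume t: "cmod t < 1"
    have zw: "t * w j \<in> disc" for j
    proof -
      have "cmod (w j) \<le> 1" using wd[of j] by simp
      then have "cmod t * cmod (w j) \<le> cmod t" by (simp add: mult_left_le)
      then show ?thesis using t by (simp add: norm_mult)
    qed
    have "(\<lambda>n. \<Sum>j\<in>J. \<beta> j * (dd n * (t * w j) ^ n)) sums (\<Sum>j\<in>J. \<beta> j * phi (t * w j))"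
      by (intro sums_sum sums_mult phi_sums zw)
    then have "(\<lambda>n. \<Sum>j\<in>J. \<beta> j * (dd n * (t * w j) ^ n)) sums 0" using zero t by simp
    moreover have "(\<lambda>n. \<Sum>j\<in>J. \<beta> j * (dd n * (t * w j) ^ n)) = (\<lambda>n. dd n * (\<Sum>j\<in>J. \<beta> j * w j ^ n) * t ^ n)"
      by (simp add: sum_distrib_left sum_distrib_right power_mult_distrib mult_ac)
    ultimately show "(\<lambda>n. dd n * (\<Sum>j\<in>J. \<beta> j * w j ^ n) * t ^ n) sums 0" by simp
  qed
  have J1: "J = insert 0 {1..Suc D}" unfolding J_def by auto
  have eqT: "(\<Sum>j\<in>{1..Suc D}. \<beta> j * ((1/2) ^ n) ^ j) = 0" if n: "n \<in> T'" for n
  proof -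
    have n0: "n \<noteq> 0"
    proof
      assume "n = 0"
      then show False using n T'0 by simp
    qed
    have "(\<Sum>j\<in>J. \<beta> j * w j ^ n) = 0" using coef[of n] T'd[OF n] by simp
    moreover have "(\<Sum>j\<in>J. \<beta> j * w j ^ n) = (\<Sum>j\<in>{1..Suc D}. \<beta> j * ((1/2) ^ n) ^ j)"
      unfolding J1 using n0 by (simp add: w_def power_mult[symmetric] mult.commute)
    ultimately show ?thesis by simp
  qed
  have b0: "\<forall>j\<in>{1..Suc D}. \<beta> j = 0" by (rule vand[OF T'(2) T'(3) T'0 eqT])
  have a0j: "\<alpha> j = 0" if "j \<in> {1..Suc D}" for j
    using b0 that \<delta>nz[OF wd[of j]] unfolding \<beta>_def by auto
  have "(\<Sum>j\<in>J. \<alpha> j) = \<alpha> 0" unfolding J1 using a0j by simp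
  then have "\<alpha> 0 = 0" using sa by simp
  moreover obtain j where j: "j \<in> J" "\<alpha> j \<noteq> 0" using anz by blast
  ultimately show False using a0j unfolding J1 by auto
qed

end

context rk2 begin

lemma phi_diag: assumes "z \<in> disc" shows "Im (phi (z * cnj z)) = 0 \<and> Re (phi (z * cnj z)) < 1"
proof -
  have k: "Im (k z z) = 0 \<and> Re (k z z) > 0" by (rule k_diag_pos[OF assms])
  have a: "Im a0 = 0 \<and> Re a0 > 0" by (rule a0_pos)
  have "phi (z * cnj z) = 1 - a0 / k z z" by (rule phi_k[OF assms assms])
  moreover have "a0 / k z z = of_real (Re a0 / Re (k z z))"
    using k a by (simp add: complex_eq_iff Re_divide Im_divide power2_eq_square)
  moreover have "Re a0 / Re (k z z) > 0" using k a by simp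
  ultimately show ?thesis by simp
qed

lemma emb_core:
  assumes bz: "\<forall>z\<in>disc. \<forall>i. d \<le> enat i \<longrightarrow> b z i = 0"
    and bs: "\<And>z w. z \<in> disc \<Longrightarrow> w \<in> disc \<Longrightarrow> (\<lambda>i. b z i * cnj (b w i)) sums phi (z * cnj w)"
  shows "embeds_in k d"
  unfolding embeds_in_def
proof (intro exI[of _ b] exI[of _ "\<lambda>z. complex_of_real (sqrt (Re a0))"] conjI ballI)
  fix z :: complex assume z: "z \<in> disc"
  show "\<forall>i. d \<le> enat i \<longrightarrow> b z i = 0" using bz z by blast
  have "(\<lambda>i. Re (b z i * cnj (b z i))) sums Re (phi (z * cnj z))" by (rule sums_Re[OF bs[OF z z]])
  moreover have "Re (b z i * cnj (b z i)) = (cmod (b z i))\<^sup>2" for i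
    using complex_norm_square[of "b z i"] by (metis Re_complex_of_real)
  ultimately have s: "(\<lambda>i. (cmod (b z i))\<^sup>2) sums Re (phi (z * cnj z))" by simp
  show "summable (\<lambda>i. (cmod (b z i))\<^sup>2)" using s by (rule sums_summable)
  show "(\<Sum>i. (cmod (b z i))\<^sup>2) < 1" using sums_unique[OF s] phi_diag[OF z] by simp
  show "complex_of_real (sqrt (Re a0)) \<noteq> 0" using a0_pos by simp
next
  fix z w :: complex assume z: "z \<in> disc" and w: "w \<in> disc"
  have d: "complex_of_real (sqrt (Re a0)) * cnj (complex_of_real (sqrt (Re a0))) = a0"
  proof -
    have r: "Re a0 \<ge> 0" using a0_pos by simp
    have "complex_of_real (sqrt (Re a0)) * cnj (complex_of_real (sqrt (Re a0))) = of_real (sqrt (Re a0) * sqrt (Re a0))"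
      by (simp only: complex_cnj_complex_of_real of_real_mult)
    also have "\<dots> = of_real (Re a0)" using r by simp
    also have "\<dots> = a0" using a0_real by simp
    finally show ?thesis .
  qed
  have "(\<Sum>i. b z i * cnj (b w i)) = phi (z * cnj w)" using sums_unique[OF bs[OF z w]] by simp
  moreover have "phi (z * cnj w) = 1 - a0 / k z w" by (rule phi_k[OF z w])
  ultimately show "k z w = complex_of_real (sqrt (Re a0)) * cnj (complex_of_real (sqrt (Re a0))) /
        (1 - (\<Sum>i. b z i * cnj (b w i)))"
    unfolding d using k_nz[OF z w] a0_nz by simp
qed

lemma emb_inf:
  assumes cp: "complete_pick H ip k"
  shows "embeds_in k \<infinity>"
proof -
  define b where "b z i = complex_of_real (sqrt (Re (dd i))) * z ^ i" for z i
  show ?thesis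
  proof (rule emb_core[where b = b])
  show "\<forall>z\<in>disc. \<forall>i. \<infinity> \<le> enat i \<longrightarrow> b z i = 0" by simp
  fix z w :: complex assume z: "z \<in> disc" and w: "w \<in> disc"
  have bb: "b z i * cnj (b w i) = dd i * (z * cnj w) ^ i" for i
  proof -
    have r: "Im (dd i) = 0" "Re (dd i) \<ge> 0" using dd_nonneg[OF cp, of i] by auto
    have "complex_of_real (sqrt (Re (dd i))) * complex_of_real (sqrt (Re (dd i))) = dd i"
      using r by (simp flip: of_real_mult add: complex_eq_iff)
    then show ?thesis unfolding b_def by (simp add: power_mult_distrib mult_ac)
  qed
  have t: "z * cnj w \<in> disc"
  proof -
    have "cmod z * cmod w \<le> cmod z" using w by (intro mult_left_le) auto
    then show ?thesis using z by (simp add: norm_mult)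
  qed
  show "(\<lambda>i. b z i * cnj (b w i)) sums phi (z * cnj w)" unfolding bb by (rule phi_sums[OF t])
  qed
qed

lemma emb_fin:
  assumes cp: "complete_pick H ip k" and fS: "finite {n. dd n \<noteq> 0}"
  shows "embeds_in k (enat (card {n. dd n \<noteq> 0}))"
proof -
  define S where "S = {n. dd n \<noteq> 0}"
  define L where "L = sorted_list_of_set S"
  define N where "N = card S"
  have LN: "length L = N" unfolding L_def N_def by simp
  have Ld: "distinct L" "set L = S" unfolding L_def using fS S_def by auto
  have bij: "bij_betw ((!) L) {..<N} S" by (rule bij_betw_nth) (use Ld LN in auto)
  define b where "b z i = (if i < N then complex_of_real (sqrt (Re (dd (L ! i)))) * z ^ (L ! i) else 0)" for z i
  have "embeds_in k (enat N)"
  proof (rule emb_core[where b = b])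
    show "\<forall>z\<in>disc. \<forall>i. enat N \<le> enat i \<longrightarrow> b z i = 0" unfolding b_def by simp
    fix z w :: complex assume z: "z \<in> disc" and w: "w \<in> disc"
    have t: "z * cnj w \<in> disc"
    proof -
      have "cmod z * cmod w \<le> cmod z" using w by (intro mult_left_le) auto
      then show ?thesis using z by (simp add: norm_mult)
    qed
    have dr: "complex_of_real (sqrt (Re (dd n))) * complex_of_real (sqrt (Re (dd n))) = dd n" for n
    proof -
      have r: "Im (dd n) = 0" "Re (dd n) \<ge> 0" using dd_nonneg[OF cp, of n] by auto
      then show ?thesis by (simp flip: of_real_mult add: complex_eq_iff)
    qed
    have bb: "b z i * cnj (b w i) = (if i \<in> {..<N} then dd (L ! i) * (z * cnj w) ^ (L ! i) else 0)" for i
      unfolding b_def using dr[of "L ! i"] by (simp add: power_mult_distrib mult_ac)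
    have "(\<lambda>i. b z i * cnj (b w i)) sums (\<Sum>i\<in>{..<N}. dd (L ! i) * (z * cnj w) ^ (L ! i))"
      unfolding bb by (rule sums_If_finite_set) simp
    also have "(\<Sum>i\<in>{..<N}. dd (L ! i) * (z * cnj w) ^ (L ! i)) = (\<Sum>n\<in>S. dd n * (z * cnj w) ^ n)"
      by (rule sum.reindex_bij_betw[OF bij])
    also have "\<dots> = phi (z * cnj w)"
    proof -
      have "phi (z * cnj w) = (\<Sum>n. dd n * (z * cnj w) ^ n)" using sums_unique[OF phi_sums[OF t]] .
      also have "\<dots> = (\<Sum>n\<in>S. dd n * (z * cnj w) ^ n)"
        by (rule suminf_finite) (use fS in \<open>auto simp: S_def\<close>)
      finally show ?thesis by simp
    qed
    finally show "(\<lambda>i. b z i * cnj (b w i)) sums phi (z * cnj w)" .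
  qed
  then show ?thesis unfolding N_def S_def .
qed

lemma poly_sums: fixes p :: "complex poly" shows "(\<lambda>n. coeff p n * t ^ n) sums poly p t"
proof -
  have "(\<lambda>n. coeff p n * t ^ n) sums (\<Sum>n\<in>{..degree p}. coeff p n * t ^ n)"
    by (rule sums_finite) (auto simp: coeff_eq_0)
  then show ?thesis by (subst poly_altdef) assumption
qed

lemma p_dd:
  assumes hp: "\<forall>z\<in>disc. \<forall>w\<in>disc. 1 / k 0 0 - 1 / k z w = poly p (z * cnj w)"
  shows "dd n = a0 * coeff p n"
proof -
  have ph: "phi t = a0 * poly p t" if t: "t \<in> disc" for t
  proof -
    obtain z w where zw: "z \<in> disc" "w \<in> disc" "t = z * cnj w" using disc_prod[OF t] by blast
    have "1 / k 0 0 - 1 / k z w = poly p (z * cnj w)" using hp zw by blast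
    then have "poly p t = 1 / a0 - (1 - phi t) / a0" using zw inv_k[OF zw(1,2)] unfolding a0_def by simp
    then show ?thesis using a0_nz by (simp add: field_simps)
  qed
  have "dd n - a0 * coeff p n = 0"
  proof (rule powser_zero[where a = "\<lambda>n. dd n - a0 * coeff p n"])
    fix t :: complex assume t: "cmod t < 1"
    have "(\<lambda>n. dd n * t ^ n - a0 * (coeff p n * t ^ n)) sums (phi t - a0 * poly p t)"
      by (intro sums_diff sums_mult poly_sums phi_sums) (use t in simp)
    then show "(\<lambda>n. (dd n - a0 * coeff p n) * t ^ n) sums 0" using ph[of t] t by (simp add: algebra_simps)
  qed
  then show ?thesis by simp
qed

lemma S_of_p:
  assumes hp: "\<forall>z\<in>disc. \<forall>w\<in>disc. 1 / k 0 0 - 1 / k z w = poly p (z * cnj w)"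
  shows "{n. dd n \<noteq> 0} = {n. coeff p n \<noteq> 0}" "finite {n. dd n \<noteq> 0}"
proof -
  show e: "{n. dd n \<noteq> 0} = {n. coeff p n \<noteq> 0}" using p_dd[OF hp] a0_nz by auto
  have "{n. coeff p n \<noteq> 0} \<subseteq> {..degree p}" by (auto intro: le_degree)
  then show "finite {n. dd n \<noteq> 0}" unfolding e using finite_subset by blast
qed

lemma p_of_S:
  assumes fS: "finite {n. dd n \<noteq> 0}"
  shows "\<exists>p. \<forall>z\<in>disc. \<forall>w\<in>disc. 1 / k 0 0 - 1 / k z w = poly p (z * cnj w)"
proof -
  define S where "S = {n. dd n \<noteq> 0}"
  define p where "p = (\<Sum>n\<in>S. monom (dd n / a0) n)"
  have "1 / k 0 0 - 1 / k z w = poly p (z * cnj w)" if z: "z \<in> disc" and w: "w \<in> disc" for z w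
  proof -
    have t: "z * cnj w \<in> disc"
    proof -
      have "cmod z * cmod w \<le> cmod z" using w by (intro mult_left_le) auto
      then show ?thesis using z by (simp add: norm_mult)
    qed
    have "phi (z * cnj w) = (\<Sum>n. dd n * (z * cnj w) ^ n)" using sums_unique[OF phi_sums[OF t]] .
    also have "\<dots> = (\<Sum>n\<in>S. dd n * (z * cnj w) ^ n)"
      by (rule suminf_finite) (use fS in \<open>auto simp: S_def\<close>)
    finally have ph: "phi (z * cnj w) = (\<Sum>n\<in>S. dd n * (z * cnj w) ^ n)" .
    have "poly p (z * cnj w) = (\<Sum>n\<in>S. dd n / a0 * (z * cnj w) ^ n)"
      unfolding p_def by (simp add: poly_sum poly_monom)
    also have "\<dots> = phi (z * cnj w) / a0" unfolding ph by (simp add: sum_divide_distrib)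
    finally have pp: "poly p (z * cnj w) = phi (z * cnj w) / a0" .
    show ?thesis unfolding pp using inv_k[OF z w] a0_nz unfolding a0_def[symmetric]
      by (simp add: field_simps)
  qed
  then show ?thesis by blast
qed

end

theorem theorem1p8:
  fixes H :: "(complex \<Rightarrow> complex) set"
    and ip :: "(complex \<Rightarrow> complex) \<Rightarrow> (complex \<Rightarrow> complex) \<Rightarrow> complex"
    and k :: "complex \<Rightarrow> complex \<Rightarrow> complex"
  assumes "rkhs_disc H ip k"
    and "rotation_invariant H ip"
    and "irreducible_kernel k"
    and "complete_pick H ip k"
  shows "(embedding_dimension k \<noteq> \<infinity> \<longleftrightarrow>
            (\<exists>p :: complex poly. \<forall>z\<in>disc. \<forall>w\<in>disc.
               1 / k 0 0 - 1 / k z w = poly p (z * cnj w)))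
       \<and> (\<forall>p :: complex poly. (\<forall>z\<in>disc. \<forall>w\<in>disc.
               1 / k 0 0 - 1 / k z w = poly p (z * cnj w)) \<longrightarrow>
            embedding_dimension k = enat (card {n. coeff p n \<noteq> 0}))"
proof -
  interpret R: rk2 H ip k
    by (intro rk2.intro rk.intro rk2_axioms.intro assms(1,2,3))
  note cp = assms(4)
  define E where "E = embedding_dimension k"
  have ei: "embeds_in k \<infinity>" by (rule R.emb_inf[OF cp])
  have EE: "embeds_in k E" unfolding E_def embedding_dimension_def by (rule LeastI[of "embeds_in k", OF ei])
  have Ele: "embeds_in k d \<Longrightarrow> E \<le> d" for d unfolding E_def embedding_dimension_def by (rule Least_le)
  have fin: "finite {n. R.dd n \<noteq> 0}" if "E \<noteq> \<infinity>"
  proof -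
    obtain D where D: "E = enat D" using \<open>E \<noteq> \<infinity>\<close> not_infinity_eq by blast
    show ?thesis
    proof (rule ccontr)
      assume "infinite {n. R.dd n \<noteq> 0}"
      then obtain B where B: "finite B" "card B = Suc D" "B \<subseteq> {n. R.dd n \<noteq> 0}"
        using infinite_arbitrarily_large by blast
      have "card B \<le> D" by (rule R.lower[OF EE[unfolded D] B(1) B(3)])
      then show False using B(2) by simp
    qed
  qed
  have part1: "E \<noteq> \<infinity> \<longleftrightarrow> (\<exists>p :: complex poly. \<forall>z\<in>disc. \<forall>w\<in>disc. 1 / k 0 0 - 1 / k z w = poly p (z * cnj w))"
  proof
    assume "E \<noteq> \<infinity>"
    then show "\<exists>p :: complex poly. \<forall>z\<in>disc. \<forall>w\<in>disc. 1 / k 0 0 - 1 / k z w = poly p (z * cnj w)"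
      using fin R.p_of_S by blast
  next
    assume "\<exists>p :: complex poly. \<forall>z\<in>disc. \<forall>w\<in>disc. 1 / k 0 0 - 1 / k z w = poly p (z * cnj w)"
    then obtain p :: "complex poly" where hp: "\<forall>z\<in>disc. \<forall>w\<in>disc. 1 / k 0 0 - 1 / k z w = poly p (z * cnj w)" by blast
    have le: "E \<le> enat (card {n. R.dd n \<noteq> 0})" by (rule Ele[OF R.emb_fin[OF cp R.S_of_p(2)[OF hp]]])
    show "E \<noteq> \<infinity>"
    proof
      assume "E = \<infinity>"
      then show False using le by simp
    qed
  qed
  have part2: "E = enat (card {n. coeff p n \<noteq> 0})"
    if hp: "\<forall>z\<in>disc. \<forall>w\<in>disc. 1 / k 0 0 - 1 / k z w = poly p (z * cnj w)" for p :: "complex poly"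
  proof -
    have S: "{n. R.dd n \<noteq> 0} = {n. coeff p n \<noteq> 0}" "finite {n. R.dd n \<noteq> 0}" using R.S_of_p[OF hp] by auto
    have le: "E \<le> enat (card {n. R.dd n \<noteq> 0})" by (rule Ele[OF R.emb_fin[OF cp S(2)]])
    have "E \<noteq> \<infinity>"
    proof
      assume "E = \<infinity>"
      then show False using le by simp
    qed
    then obtain D where D: "E = enat D" using not_infinity_eq by blast
    have "card {n. R.dd n \<noteq> 0} \<le> D" by (rule R.lower[OF EE[unfolded D] S(2)]) simp
    then show ?thesis using le D S(1) by simp
  qed
  show ?thesis using part1 part2 unfolding E_def by blast
qed

end
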